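(* Let $n\ge 1$ and let $C\in\mathcal{C}_n$ be an $n$-qubit Clifford unitary. Write, for $i=1,\dots,n$, $$C Z_i C^\dagger = (-1)^{f_i} P^{\vec a_i,\vec b_i},\qquad C X_i C^\dagger = (-1)^{h_i} P^{\vec c_i,\vec d_i},$$ with $\vec a_i,\vec b_i,\vec c_i,\vec d_i\in\{0,1\}^n$ and $f_i,h_i\in\{0,1\}$, and let $$S=\begin{pmatrix} A & C'\\ B & D\end{pmatrix}\in\mathbb{F}_2^{2n\times 2n},$$ where $A,B,C',D\in\mathbb{F}_2^{n\times n}$ have $i$-th columns $\vec a_i,\vec b_i,\vec c_i,\vec d_i$ respectively ($S$ is the symplectic representation of the Pauli-sign-free part $\widetilde C$ of $C$, i.e. of the element of $\mathcal{C}_n/\mathcal{P}_n$ determined by $C$). Run the Twin-$C$ circuit on input bit strings $\vec i,\vec j\in\{0,1\}^n$, and let $\vec J=(\vec i,\vec j)\in\mathbb{F}_2^{2n}$ (column vector obtained by concatenation). Then the measurement output $\vec K=(\vec k,\vec \ell)\in\mathbb{F}_2^{2n}$ satisfies $$\vec K = S\vec J + \vec F_0 \pmod 2,$$ where $\vec F_0\in\{0,1\}^{2n}$ depends on $S$ but not on $\vec J$.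
   Context: Single-qubit Paulis: $X=\begin{pmatrix}0&1\\1&0\end{pmatrix}$, $Y=\begin{pmatrix}0&-i\\i&0\end{pmatrix}$, $Z=\begin{pmatrix}1&0\\0&-1\end{pmatrix}$; $X_j,Z_j$ act on qubit $j$. Labeling: $P^{00}=I$, $P^{01}=X$, $P^{10}=Z$, $P^{11}=Y$, and for $\vec a,\vec b\in\{0,1\}^n$, $P^{\vec a,\vec b}=P^{a_1b_1}\otimes\cdots\otimes P^{a_nb_n}$; equivalently $P^{\vec a,\vec b}=(-i)^{\vec a\cdot\vec b}\prod_{i} Z_i^{a_i}X_i^{b_i}$. The Pauli group is $\mathcal{P}_n=\{i^kP^{\vec a,\vec b}\}$ and the Clifford group is $\mathcal{C}_n=\{U\in U(2^n): U\mathcal{P}_nU^\dagger\subseteq\mathcal{P}_n\}$. Twin-$C$ circuit: two registers $\mathcal{A},\mathcal{B}$ of $n$ qubits each are prepared in the computational basis state $|\vec i\rangle_{\mathcal{A}}|\vec j\rangle_{\mathcal{B}}$; apply $H^{\otimes n}$ to $\mathcal{A}$; apply CNOTs from qubit $r$ of $\mathcal{A}$ (control) to qubit $r$ of $\mathcal{B}$ (target) for each $r=1,\dots,n$; apply $C$ to $\mathcal{A}$ and $C$ to $\mathcal{B}$; apply the same transversal CNOTs again; apply $H^{\otimes n}$ to $\mathcal{A}$; measure both registers in the computational basis, obtaining $\vec k$ on $\mathcal{A}$ and $\vec\ell$ on $\mathcal{B}$. (The last three steps constitute a Bell-basis measurement.) *)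

theory Defs
  imports Complex_Main "Jordan_Normal_Form.Matrix"
begin

text \<open>An N-qubit computational basis state |x_0 ... x_(N-1)> is indexed by the natural
  number x < 2^N whose binary expansion is x_0 x_1 ... x_(N-1), qubit 0 being the
  most significant bit (so the first tensor factor is qubit 0).  Qubits are 0-indexed
  here (paper qubit r corresponds to index r-1).\<close>

definition qbit :: "nat \<Rightarrow> nat \<Rightarrow> nat \<Rightarrow> bool" where
  "qbit N x r = odd (x div 2 ^ (N - 1 - r))"

definition tensor_ops :: "nat \<Rightarrow> (nat \<Rightarrow> complex mat) \<Rightarrow> complex mat" where
  "tensor_ops N ops = mat (2 ^ N) (2 ^ N)
     (\<lambda>(y, x). \<Prod>r<N. ops r $$ (of_bool (qbit N y r), of_bool (qbit N x r)))"

definition dagger :: "complex mat \<Rightarrow> complex mat" where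
  "dagger A = mat (dim_col A) (dim_row A) (\<lambda>(i, j). cnj (A $$ (j, i)))"

definition unitary_mat :: "nat \<Rightarrow> complex mat \<Rightarrow> bool" where
  "unitary_mat d U \<longleftrightarrow> U \<in> carrier_mat d d \<and> U * dagger U = 1\<^sub>m d"

definition I2 :: "complex mat" where "I2 = mat_of_rows_list 2 [[1, 0], [0, 1]]"
definition X2 :: "complex mat" where "X2 = mat_of_rows_list 2 [[0, 1], [1, 0]]"
definition Y2 :: "complex mat" where "Y2 = mat_of_rows_list 2 [[0, -\<i>], [\<i>, 0]]"
definition Z2 :: "complex mat" where "Z2 = mat_of_rows_list 2 [[1, 0], [0, -1]]"
definition H2 :: "complex mat" where
  "H2 = mat_of_rows_list 2 [[1 / sqrt 2, 1 / sqrt 2], [1 / sqrt 2, - 1 / sqrt 2]]"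

definition P1 :: "bool \<Rightarrow> bool \<Rightarrow> complex mat" where
  "P1 a b = (if a then (if b then Y2 else Z2) else (if b then X2 else I2))"

text \<open>n-qubit Pauli P^{a,b}; vectors in F_2^n are functions nat => bool (entries r < n used).\<close>
definition pauli :: "nat \<Rightarrow> (nat \<Rightarrow> bool) \<Rightarrow> (nat \<Rightarrow> bool) \<Rightarrow> complex mat" where
  "pauli n a b = tensor_ops n (\<lambda>r. P1 (a r) (b r))"

definition Xop :: "nat \<Rightarrow> nat \<Rightarrow> complex mat" where
  "Xop n j = tensor_ops n (\<lambda>r. if r = j then X2 else I2)"

definition Zop :: "nat \<Rightarrow> nat \<Rightarrow> complex mat" where
  "Zop n j = tensor_ops n (\<lambda>r. if r = j then Z2 else I2)"

definition pauli_group :: "nat \<Rightarrow> complex mat set" where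
  "pauli_group n = {(\<i> ^ k) \<cdot>\<^sub>m pauli n a b | k a b. True}"

definition clifford_group :: "nat \<Rightarrow> complex mat set" where
  "clifford_group n = {U. unitary_mat (2 ^ n) U \<and>
      (\<forall>P \<in> pauli_group n. U * P * dagger U \<in> pauli_group n)}"

section \<open>The Twin-C circuit on 2n qubits (register A = qubits 0..n-1, B = qubits n..2n-1)\<close>

definition cnot :: "nat \<Rightarrow> nat \<Rightarrow> nat \<Rightarrow> complex mat" where
  "cnot N c t = mat (2 ^ N) (2 ^ N) (\<lambda>(y, x).
     of_bool (\<forall>q<N. qbit N y q = (if q = t then (qbit N x t \<noteq> qbit N x c) else qbit N x q)))"

definition transversal_cnot :: "nat \<Rightarrow> complex mat" where
  "transversal_cnot n = foldr (\<lambda>r M. cnot (2 * n) r (n + r) * M) [0..<n] (1\<^sub>m (2 ^ (2 * n)))"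

definition hadamard_A :: "nat \<Rightarrow> complex mat" where
  "hadamard_A n = tensor_ops (2 * n) (\<lambda>r. if r < n then H2 else I2)"

text \<open>C on A and C on B, i.e. C \<otimes> C (A is the more significant half).\<close>
definition twin_op :: "nat \<Rightarrow> complex mat \<Rightarrow> complex mat" where
  "twin_op n C = mat (2 ^ (2 * n)) (2 ^ (2 * n)) (\<lambda>(y, x).
     C $$ (y div 2 ^ n, x div 2 ^ n) * C $$ (y mod 2 ^ n, x mod 2 ^ n))"

definition twin_circuit :: "nat \<Rightarrow> complex mat \<Rightarrow> complex mat" where
  "twin_circuit n C = hadamard_A n * transversal_cnot n * twin_op n C
                       * transversal_cnot n * hadamard_A n"

definition twin_prob :: "nat \<Rightarrow> complex mat \<Rightarrow> nat \<Rightarrow> nat \<Rightarrow> nat \<Rightarrow> nat \<Rightarrow> real" where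
  "twin_prob n C i j k l = (cmod (twin_circuit n C $$ (k * 2 ^ n + l, i * 2 ^ n + j)))\<^sup>2"

text \<open>S = [A C'; B D] (2n x 2n), i-th columns of A,B,C',D being a i, b i, c i, d i.\<close>
definition symp_S :: "nat \<Rightarrow> (nat \<Rightarrow> nat \<Rightarrow> bool) \<Rightarrow> (nat \<Rightarrow> nat \<Rightarrow> bool) \<Rightarrow>
    (nat \<Rightarrow> nat \<Rightarrow> bool) \<Rightarrow> (nat \<Rightarrow> nat \<Rightarrow> bool) \<Rightarrow> nat \<Rightarrow> nat \<Rightarrow> bool" where
  "symp_S n a b c d r s =
     (if s < n then (if r < n then a s r else b s (r - n))
      else (if r < n then c (s - n) r else d (s - n) (r - n)))"

definition f2_mulv :: "nat \<Rightarrow> (nat \<Rightarrow> nat \<Rightarrow> bool) \<Rightarrow> (nat \<Rightarrow> bool) \<Rightarrow> nat \<Rightarrow> bool" where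
  "f2_mulv m M v r = odd (\<Sum>s<m. of_bool (M r s \<and> v s) :: nat)"

definition concat_bits :: "nat \<Rightarrow> nat \<Rightarrow> nat \<Rightarrow> nat \<Rightarrow> bool" where
  "concat_bits n x y r = (if r < n then qbit n x r else qbit n y (r - n))"

end

theory Submission
  imports Defs "Jordan_Normal_Form.Determinant"
begin


fun bv :: "nat \<Rightarrow> (nat \<Rightarrow> bool) \<Rightarrow> nat" where
  "bv 0 w = 0"
| "bv (Suc m) w = of_bool (w 0) + 2 * bv m (\<lambda>p. w (Suc p))"

lemma bit_bv: "bit (bv m w) p \<longleftrightarrow> p < m \<and> w p"
proof (induction m arbitrary: w p)
  case 0 then show ?case by simp
next
  case (Suc m)
  show ?case
  proof (cases p)
    case 0 then show ?thesis by (simp add: bit_0)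
  next
    case (Suc q)
    have "(of_bool (w 0) + 2 * bv m (\<lambda>p. w (Suc p))) div 2 = bv m (\<lambda>p. w (Suc p))" by simp
    then show ?thesis using Suc.IH[of "\<lambda>p. w (Suc p)" q] Suc by (simp add: bit_Suc)
  qed
qed

lemma bv_less: "bv m w < 2 ^ m"
proof (induction m arbitrary: w)
  case 0 then show ?case by simp
next
  case (Suc m)
  have "bv m (\<lambda>p. w (Suc p)) < 2 ^ m" by (rule Suc.IH)
  then show ?case by (cases "w 0") auto
qed

lemma qbit_bit: "qbit N x r = bit x (N - 1 - r)"
  by (simp add: qbit_def bit_iff_odd)

definition nat_of :: "nat \<Rightarrow> (nat \<Rightarrow> bool) \<Rightarrow> nat" where
  "nat_of n v = bv n (\<lambda>p. v (n - 1 - p))"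

lemma nat_of_less: "nat_of n v < 2 ^ n"
  by (simp add: nat_of_def bv_less)

lemma qbit_nat_of: "r < n \<Longrightarrow> qbit n (nat_of n v) r = v r"
  by (simp add: qbit_bit nat_of_def bit_bv)

lemma bit_ge: "(x::nat) < 2 ^ n \<Longrightarrow> n \<le> p \<Longrightarrow> \<not> bit x p"
  by (metis bit_take_bit_iff not_less take_bit_nat_eq_self_iff)

lemma qbit_eqI: assumes "x < 2 ^ n" "y < 2 ^ n" "\<And>r. r < n \<Longrightarrow> qbit n x r = qbit n y r"
  shows "x = y"
proof -
  have "bit x p = bit y p" for p
  proof (cases "p < n")
    case True
    then have e: "n - 1 - (n - 1 - p) = p" by simp
    have "n - 1 - p < n" using True by simp
    from assms(3)[OF this] show ?thesis unfolding qbit_bit e .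
  next
    case False then show ?thesis using bit_ge assms by auto
  qed
  then show ?thesis by (simp add: bit_eq_iff)
qed

lemma nat_of_qbit: "x < 2 ^ n \<Longrightarrow> nat_of n (qbit n x) = x"
  by (rule qbit_eqI[where n=n]) (auto simp: nat_of_less qbit_nat_of)

lemma eq_nat_of_iff: "y < 2 ^ n \<Longrightarrow> (\<forall>r<n. qbit n y r = v r) \<longleftrightarrow> y = nat_of n v"
  by (auto simp: qbit_nat_of intro: qbit_eqI nat_of_less)

lemma nat_of_cong: "(\<And>r. r < n \<Longrightarrow> v r = w r) \<Longrightarrow> nat_of n v = nat_of n w"
  by (rule qbit_eqI[where n=n]) (auto simp: nat_of_less qbit_nat_of)

definition xorv :: "nat \<Rightarrow> nat \<Rightarrow> (nat \<Rightarrow> bool) \<Rightarrow> nat" where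
  "xorv n x v = nat_of n (\<lambda>r. qbit n x r \<noteq> v r)"

lemma xorv_less[simp]: "xorv n x v < 2 ^ n" by (simp add: xorv_def nat_of_less)
lemma qbit_xorv[simp]: "r < n \<Longrightarrow> qbit n (xorv n x v) r = (qbit n x r \<noteq> v r)"
  by (simp add: xorv_def qbit_nat_of)
lemma xorv_xorv[simp]: "x < 2 ^ n \<Longrightarrow> xorv n (xorv n x v) v = x"
  by (rule qbit_eqI[where n=n]) auto
lemma xorv_comm: "xorv n (xorv n x v) w = xorv n (xorv n x w) v"
  by (rule qbit_eqI[where n=n]) auto
lemma xorv_sym: "xorv n x (qbit n y) = xorv n y (qbit n x)"
  by (rule qbit_eqI[where n=n]) auto
lemma xorv_eq_iff: "x < 2 ^ n \<Longrightarrow> y < 2 ^ n \<Longrightarrow> (y = xorv n x v) \<longleftrightarrow> (x = xorv n y v)"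
  by auto
lemma xorv_inj: "x < 2 ^ n \<Longrightarrow> y < 2 ^ n \<Longrightarrow> (xorv n x v = xorv n y v) \<longleftrightarrow> x = y"
  by (metis xorv_xorv)

lemma sum_xorv: "(\<Sum>x<2^n. F (xorv n x v)) = (\<Sum>x<(2::nat)^n. (F x :: 'a::comm_monoid_add))"
  by (rule sum.reindex_bij_witness[where i="\<lambda>x. xorv n x v" and j="\<lambda>x. xorv n x v"]) auto

lemma xorv_False[simp]: "x < 2 ^ n \<Longrightarrow> xorv n x (\<lambda>_. False) = x"
  by (rule qbit_eqI[where n=n]) auto


definition sg :: "bool \<Rightarrow> complex" where "sg p = (if p then -1 else 1)"

lemma sg_xor: "sg (p \<noteq> q) = sg p * sg q" by (simp add: sg_def)
lemma sg_sq[simp]: "sg p * sg p = 1" by (simp add: sg_def)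
lemma sg_sq2[simp]: "sg p * (sg p * z) = z" by (simp add: sg_def)
lemma sg_nz[simp]: "sg p \<noteq> 0" by (simp add: sg_def)
lemma sg_inj: "sg p = sg q \<longleftrightarrow> p = q" by (simp add: sg_def)
lemma sg_simps[simp]: "sg True = -1" "sg False = 1" by (simp_all add: sg_def)

fun dotb :: "nat \<Rightarrow> (nat \<Rightarrow> bool) \<Rightarrow> (nat \<Rightarrow> bool) \<Rightarrow> bool" where
  "dotb 0 u v = False"
| "dotb (Suc m) u v = (dotb m u v \<noteq> (u m \<and> v m))"

lemma dotb_cong: "(\<And>r. r < m \<Longrightarrow> u r = u' r) \<Longrightarrow> (\<And>r. r < m \<Longrightarrow> v r = v' r) \<Longrightarrow> dotb m u v = dotb m u' v'"
  by (induction m) auto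
lemma dotb_xor2: "dotb m u (\<lambda>r. v r \<noteq> w r) = (dotb m u v \<noteq> dotb m u w)"
  by (induction m) auto
lemma dotb_xor1: "dotb m (\<lambda>r. u r \<noteq> w r) v = (dotb m u v \<noteq> dotb m w v)"
  by (induction m) auto
lemma dotb_comm: "dotb m u v = dotb m v u"
  by (induction m) auto
lemma dotb_False1[simp]: "dotb m (\<lambda>_. False) v = False" by (induction m) auto
lemma dotb_False2[simp]: "dotb m u (\<lambda>_. False) = False" by (induction m) auto
lemma dotb_ind: "s < m \<Longrightarrow> dotb m (\<lambda>r. r = s) v = v s"
proof (induction m)
  case 0 then show ?case by simp
next
  case (Suc m)
  have "dotb m (\<lambda>r. r = s) v = False" if "s \<ge> m" for m
    using that by (induction m) auto
  with Suc show ?case by (cases "s = m") auto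
qed
lemma dotb_ind2: "s < m \<Longrightarrow> dotb m v (\<lambda>r. r = s) = v s"
  using dotb_ind dotb_comm by metis
lemma sg_dotb: "sg (dotb m u v) = (\<Prod>r<m. sg (u r \<and> v r))"
  by (induction m) (auto simp: sg_def)
lemma dotb_swap: "dotb m u (\<lambda>q. dotb m' (M q) v) = dotb m' (\<lambda>t. dotb m u (\<lambda>q. M q t)) v"
proof (induction m)
  case 0 then show ?case by simp
next
  case (Suc m)
  have "dotb m' (\<lambda>t. dotb (Suc m) u (\<lambda>q. M q t)) v
     = dotb m' (\<lambda>t. dotb m u (\<lambda>q. M q t) \<noteq> (u m \<and> M m t)) v" by simp
  also have "\<dots> = (dotb m' (\<lambda>t. dotb m u (\<lambda>q. M q t)) v \<noteq> dotb m' (\<lambda>t. u m \<and> M m t) v)"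
    by (rule dotb_xor1)
  also have "dotb m' (\<lambda>t. u m \<and> M m t) v = (u m \<and> dotb m' (M m) v)"
    by (induction m') auto
  finally show ?case using Suc by simp
qed

lemma f2_mulv_dotb: "f2_mulv m M v r = dotb m (M r) v"
  unfolding f2_mulv_def by (induction m) auto

definition php :: "nat \<Rightarrow> (nat \<Rightarrow> bool) \<Rightarrow> (nat \<Rightarrow> bool) \<Rightarrow> complex" where
  "php n a b = (\<Prod>r<n. if a r \<and> b r then - \<i> else 1)"

lemma php_sq: "php n a b * php n a b = sg (dotb n a b)"
  unfolding php_def sg_dotb prod.distrib[symmetric]
  by (rule prod.cong) (auto simp: sg_def)
lemma php_nz[simp]: "php n a b \<noteq> 0"
  unfolding php_def by (subst prod_zero_iff) auto

lemma tensor_ops_carrier[simp]: "tensor_ops N ops \<in> carrier_mat (2 ^ N) (2 ^ N)"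
  by (simp add: tensor_ops_def)
lemma tensor_ops_dim[simp]: "dim_row (tensor_ops N ops) = 2 ^ N" "dim_col (tensor_ops N ops) = 2 ^ N"
  by (simp_all add: tensor_ops_def)
lemma tensor_ops_entry: "y < 2 ^ N \<Longrightarrow> x < 2 ^ N \<Longrightarrow>
  tensor_ops N ops $$ (y, x) = (\<Prod>r<N. ops r $$ (of_bool (qbit N y r), of_bool (qbit N x r)))"
  by (simp add: tensor_ops_def)

lemma P1_entry: "P1 a b $$ (of_bool p, of_bool q) =
   (if p = (q \<noteq> b) then (if a \<and> b then - \<i> else 1) * sg (a \<and> p) else 0)"
  by (cases a; cases b; cases p; cases q) (simp_all add: P1_def X2_def Y2_def Z2_def I2_def mat_of_rows_list_def)

lemma prod_if_zero: "(\<Prod>r\<in>A. if c r then f r else (0::'a::comm_semiring_1)) = (if \<forall>r\<in>A. c r then prod f A else 0)"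
  if "finite A" using that by (induction A rule: finite_induct) auto

lemma pauli_carrier[simp]: "pauli n a b \<in> carrier_mat (2 ^ n) (2 ^ n)"
  by (simp add: pauli_def)

lemma pauli_entry: assumes "y < 2 ^ n" "x < 2 ^ n"
  shows "pauli n a b $$ (y, x) = (if y = xorv n x b then php n a b * sg (dotb n a (qbit n y)) else 0)"
proof -
  have "pauli n a b $$ (y, x) = (\<Prod>r<n. if qbit n y r = (qbit n x r \<noteq> b r)
       then (if a r \<and> b r then - \<i> else 1) * sg (a r \<and> qbit n y r) else 0)"
    unfolding pauli_def using assms by (simp add: tensor_ops_entry P1_entry)
  also have "\<dots> = (if \<forall>r<n. qbit n y r = (qbit n x r \<noteq> b r) then
       (\<Prod>r<n. (if a r \<and> b r then - \<i> else 1) * sg (a r \<and> qbit n y r)) else 0)"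
    by (subst prod_if_zero) auto
  also have "(\<forall>r<n. qbit n y r = (qbit n x r \<noteq> b r)) \<longleftrightarrow> y = xorv n x b"
    using eq_nat_of_iff[OF assms(1)] by (simp add: xorv_def)
  also have "(\<Prod>r<n. (if a r \<and> b r then - \<i> else 1) * sg (a r \<and> qbit n y r)) = php n a b * sg (dotb n a (qbit n y))"
    by (simp add: prod.distrib php_def sg_dotb)
  finally show ?thesis .
qed

lemma mult_entry: assumes "A \<in> carrier_mat m p" "B \<in> carrier_mat p q" "i < m" "j < q"
  shows "(A * B) $$ (i, j) = (\<Sum>k<p. A $$ (i, k) * B $$ (k, j))"
  using assms by (simp add: scalar_prod_def lessThan_atLeast0)

lemma sum_single: assumes "z0 < (N::nat)"
  shows "(\<Sum>z<N. (if z = z0 then f z else 0)) = (f z0 :: 'a :: comm_monoid_add)"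
  using assms by (subst sum.delta) auto

lemma pauli_mult_left: assumes M: "M \<in> carrier_mat (2 ^ n) q" and "y < 2 ^ n" "x < q"
  shows "(pauli n a b * M) $$ (y, x) = php n a b * sg (dotb n a (qbit n y)) * M $$ (xorv n y b, x)"
proof -
  have "(pauli n a b * M) $$ (y, x) = (\<Sum>z<2^n. pauli n a b $$ (y, z) * M $$ (z, x))"
    using assms by (intro mult_entry[OF pauli_carrier M]) auto
  also have "\<dots> = (\<Sum>z<2^n. if z = xorv n y b then php n a b * sg (dotb n a (qbit n y)) * M $$ (z, x) else 0)"
    using assms by (intro sum.cong) (auto simp: pauli_entry xorv_eq_iff)
  also have "\<dots> = php n a b * sg (dotb n a (qbit n y)) * M $$ (xorv n y b, x)"
    by (rule sum_single) simp
  finally show ?thesis .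
qed

lemma pauli_mult_right: assumes M: "M \<in> carrier_mat q (2 ^ n)" and "y < q" "x < 2 ^ n"
  shows "(M * pauli n a b) $$ (y, x) = M $$ (y, xorv n x b) * (php n a b * sg (dotb n a (qbit n (xorv n x b))))"
proof -
  have "(M * pauli n a b) $$ (y, x) = (\<Sum>z<2^n. M $$ (y, z) * pauli n a b $$ (z, x))"
    using assms by (intro mult_entry[OF M pauli_carrier]) auto
  also have "\<dots> = (\<Sum>z<2^n. if z = xorv n x b then M $$ (y, z) * (php n a b * sg (dotb n a (qbit n z))) else 0)"
    using assms by (intro sum.cong) (auto simp: pauli_entry)
  also have "\<dots> = M $$ (y, xorv n x b) * (php n a b * sg (dotb n a (qbit n (xorv n x b))))"
    by (rule sum_single) simp
  finally show ?thesis .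
qed

lemma Zop_pauli: "Zop n s = pauli n (\<lambda>r. r = s) (\<lambda>_. False)"
  unfolding Zop_def pauli_def by (rule arg_cong[where f="tensor_ops n"]) (auto simp: P1_def)
lemma Xop_pauli: "Xop n s = pauli n (\<lambda>_. False) (\<lambda>r. r = s)"
  unfolding Xop_def pauli_def by (rule arg_cong[where f="tensor_ops n"]) (auto simp: P1_def)

lemma php_False1[simp]: "php n (\<lambda>_. False) b = 1" by (simp add: php_def)
lemma php_False2[simp]: "php n a (\<lambda>_. False) = 1" by (simp add: php_def)


lemma dagger_carrier[simp]: "dagger A \<in> carrier_mat (dim_col A) (dim_row A)"
  by (simp add: dagger_def)
lemma dagger_entry: "i < dim_col A \<Longrightarrow> j < dim_row A \<Longrightarrow> dagger A $$ (i, j) = cnj (A $$ (j, i))"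
  by (simp add: dagger_def)

lemma dotb_xorv: "dotb n u (qbit n (xorv n y v)) = (dotb n u (qbit n y) \<noteq> dotb n u v)"
proof -
  have "dotb n u (qbit n (xorv n y v)) = dotb n u (\<lambda>r. qbit n y r \<noteq> v r)"
    by (rule dotb_cong) auto
  then show ?thesis using dotb_xor2[of n u "qbit n y" v] by simp
qed

lemma sg_dotb_xorv: "sg (dotb n u (qbit n (xorv n y v))) = sg (dotb n u (qbit n y)) * sg (dotb n u v)"
  by (simp only: dotb_xorv sg_xor)

lemma pauli_dim[simp]: "dim_row (pauli n a b) = 2^n" "dim_col (pauli n a b) = 2^n"
  by (simp_all add: pauli_def)

lemma conj_rel: assumes C: "C \<in> carrier_mat N N" and CC: "dagger C * C = 1\<^sub>m N"
  and P: "P \<in> carrier_mat N N" and Q: "Q \<in> carrier_mat N N" and E: "C * P * dagger C = \<sigma> \<cdot>\<^sub>m Q"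
  shows "C * P = \<sigma> \<cdot>\<^sub>m (Q * C)"
proof -
  have D: "dagger C \<in> carrier_mat N N" using C dagger_carrier[of C] by auto
  have "C * P = C * P * (dagger C * C)" using C P by (simp add: CC)
  also have "\<dots> = (C * P * dagger C) * C" using C P D by (simp add: assoc_mult_mat[of _ N N _ N _ N])
  also have "\<dots> = \<sigma> \<cdot>\<^sub>m (Q * C)" using E Q C by (simp add: mult_smult_assoc_mat)
  finally show ?thesis .
qed

locale twin =
  fixes n :: nat and C :: "complex mat"
    and a b c d :: "nat \<Rightarrow> nat \<Rightarrow> bool" and f h :: "nat \<Rightarrow> bool"
  assumes Ccl: "C \<in> clifford_group n"
    and HZ: "\<And>i. i < n \<Longrightarrow> C * Zop n i * dagger C = (if f i then -1 else 1) \<cdot>\<^sub>m pauli n (a i) (b i)"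
    and HX: "\<And>i. i < n \<Longrightarrow> C * Xop n i * dagger C = (if h i then -1 else 1) \<cdot>\<^sub>m pauli n (c i) (d i)"
begin

lemma Ccar: "C \<in> carrier_mat (2^n) (2^n)" using Ccl by (simp add: clifford_group_def unitary_mat_def)
lemma CCd: "C * dagger C = 1\<^sub>m (2^n)" using Ccl by (simp add: clifford_group_def unitary_mat_def)
lemma Dcar: "dagger C \<in> carrier_mat (2^n) (2^n)" using Ccar dagger_carrier[of C] by auto
lemma CdC: "dagger C * C = 1\<^sub>m (2^n)" using mat_mult_left_right_inverse[OF Ccar Dcar CCd] .

lemma row_nz: assumes "y < 2^n" shows "\<exists>x<2^n. C $$ (y, x) \<noteq> 0"
proof (rule ccontr)
  assume "\<not> ?thesis"
  then have "(C * dagger C) $$ (y, y) = 0"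
    using assms Ccar by (subst mult_entry[OF Ccar Dcar]) (auto simp: dagger_entry)
  then show False using CCd assms by simp
qed

lemma col_orth: assumes "x < 2^n" "z < 2^n"
  shows "(\<Sum>y<2^n. cnj (C $$ (y, z)) * C $$ (y, x)) = (if z = x then 1 else 0)"
proof -
  have "(dagger C * C) $$ (z, x) = (\<Sum>y<2^n. cnj (C $$ (y, z)) * C $$ (y, x))"
    using assms Ccar by (subst mult_entry[OF Dcar Ccar]) (auto simp: dagger_entry)
  then show ?thesis using CdC assms by simp
qed

definition e :: "nat \<Rightarrow> nat \<Rightarrow> bool" where "e s = (\<lambda>r. r = s)"

lemma RZ: assumes "s < n" "y < 2^n" "x < 2^n"
  shows "C $$ (y, x) * sg (qbit n x s) = sg (f s) * php n (a s) (b s) * sg (dotb n (a s) (qbit n y)) * C $$ (xorv n y (b s), x)"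
proof -
  have "C * Zop n s = sg (f s) \<cdot>\<^sub>m (pauli n (a s) (b s) * C)"
    using HZ[OF assms(1)] by (intro conj_rel[OF Ccar CdC]) (auto simp: Zop_pauli sg_def)
  then have "(C * Zop n s) $$ (y, x) = (sg (f s) \<cdot>\<^sub>m (pauli n (a s) (b s) * C)) $$ (y, x)" by simp
  moreover have "(C * Zop n s) $$ (y, x) = C $$ (y, x) * sg (qbit n x s)"
    unfolding Zop_pauli using assms by (subst pauli_mult_right[OF Ccar]) (auto simp: dotb_ind)
  moreover have "(sg (f s) \<cdot>\<^sub>m (pauli n (a s) (b s) * C)) $$ (y, x) = sg (f s) * (php n (a s) (b s) * sg (dotb n (a s) (qbit n y)) * C $$ (xorv n y (b s), x))"
  proof -
    have "(pauli n (a s) (b s) * C) $$ (y, x) = php n (a s) (b s) * sg (dotb n (a s) (qbit n y)) * C $$ (xorv n y (b s), x)"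
      using assms by (intro pauli_mult_left[OF Ccar])
    moreover have "(sg (f s) \<cdot>\<^sub>m (pauli n (a s) (b s) * C)) $$ (y, x) = sg (f s) * (pauli n (a s) (b s) * C) $$ (y, x)"
      using assms Ccar by (intro index_smult_mat(1)) auto
    ultimately show ?thesis by metis
  qed
  ultimately show ?thesis by (simp add: mult.assoc)
qed

lemma RX: assumes "s < n" "y < 2^n" "x < 2^n"
  shows "C $$ (y, xorv n x (e s)) = sg (h s) * php n (c s) (d s) * sg (dotb n (c s) (qbit n y)) * C $$ (xorv n y (d s), x)"
proof -
  have "C * Xop n s = sg (h s) \<cdot>\<^sub>m (pauli n (c s) (d s) * C)"
    using HX[OF assms(1)] by (intro conj_rel[OF Ccar CdC]) (auto simp: Xop_pauli sg_def)
  then have "(C * Xop n s) $$ (y, x) = (sg (h s) \<cdot>\<^sub>m (pauli n (c s) (d s) * C)) $$ (y, x)" by simp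
  moreover have "(C * Xop n s) $$ (y, x) = C $$ (y, xorv n x (e s))"
    unfolding Xop_pauli e_def using assms by (subst pauli_mult_right[OF Ccar]) auto
  moreover have "(sg (h s) \<cdot>\<^sub>m (pauli n (c s) (d s) * C)) $$ (y, x) = sg (h s) * (php n (c s) (d s) * sg (dotb n (c s) (qbit n y)) * C $$ (xorv n y (d s), x))"
  proof -
    have "(pauli n (c s) (d s) * C) $$ (y, x) = php n (c s) (d s) * sg (dotb n (c s) (qbit n y)) * C $$ (xorv n y (d s), x)"
      using assms by (intro pauli_mult_left[OF Ccar])
    moreover have "(sg (h s) \<cdot>\<^sub>m (pauli n (c s) (d s) * C)) $$ (y, x) = sg (h s) * (pauli n (c s) (d s) * C) $$ (y, x)"
      using assms Ccar by (intro index_smult_mat(1)) auto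
    ultimately show ?thesis by metis
  qed
  ultimately show ?thesis by (simp add: mult.assoc)
qed

end


lemma cancel_sg: "(k::complex) \<noteq> 0 \<Longrightarrow> k * sg p = k * sg q \<Longrightarrow> p = q"
  by (simp add: sg_inj)

context twin begin

lemma ZZ: assumes r: "r < n" and s: "s < n" shows "dotb n (a s) (b r) = dotb n (a r) (b s)"
proof -
  obtain x where x: "x < 2^n" and nz: "C $$ (0, x) \<noteq> 0" using row_nz[of 0] by auto
  define y where "y = xorv n (xorv n 0 (b s)) (b r)"
  have yl: "y < 2^n" by (simp add: y_def)
  have y1: "xorv n (xorv n y (b r)) (b s) = 0" by (simp add: y_def)
  have y2: "xorv n (xorv n y (b s)) (b r) = 0" using y1 xorv_comm by metis
  let ?K = "sg (f r) * php n (a r) (b r) * sg (f s) * php n (a s) (b s) * sg (dotb n (a r) (qbit n y)) * sg (dotb n (a s) (qbit n y)) * C $$ (0, x)"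
  have K: "?K \<noteq> 0" using nz by simp
  have "C $$ (y, x) * sg (qbit n x r) * sg (qbit n x s) = sg (f r) * php n (a r) (b r) * sg (dotb n (a r) (qbit n y)) * (C $$ (xorv n y (b r), x) * sg (qbit n x s))"
    by (simp add: RZ[OF r yl x])
  also have "\<dots> = ?K * sg (dotb n (a s) (b r))"
  proof -
    have "C $$ (xorv n y (b r), x) * sg (qbit n x s) = sg (f s) * php n (a s) (b s) * sg (dotb n (a s) (qbit n (xorv n y (b r)))) * C $$ (0, x)"
      using RZ[OF s _ x, of "xorv n y (b r)"] y1 by simp
    then show ?thesis by (simp add: sg_dotb_xorv mult_ac)
  qed
  finally have E1: "C $$ (y, x) * sg (qbit n x r) * sg (qbit n x s) = ?K * sg (dotb n (a s) (b r))" .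
  have "C $$ (y, x) * sg (qbit n x r) * sg (qbit n x s) = (C $$ (y, x) * sg (qbit n x s)) * sg (qbit n x r)"
    by (simp add: mult_ac)
  also have "\<dots> = (sg (f s) * php n (a s) (b s) * sg (dotb n (a s) (qbit n y)) * C $$ (xorv n y (b s), x)) * sg (qbit n x r)"
    by (simp only: RZ[OF s yl x])
  also have "\<dots> = sg (f s) * php n (a s) (b s) * sg (dotb n (a s) (qbit n y)) * (C $$ (xorv n y (b s), x) * sg (qbit n x r))"
    by (simp add: mult_ac)
  also have "\<dots> = ?K * sg (dotb n (a r) (b s))"
  proof -
    have "C $$ (xorv n y (b s), x) * sg (qbit n x r) = sg (f r) * php n (a r) (b r) * sg (dotb n (a r) (qbit n (xorv n y (b s)))) * C $$ (0, x)"
      using RZ[OF r _ x, of "xorv n y (b s)"] y2 by simp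
    then show ?thesis by (simp add: sg_dotb_xorv mult_ac)
  qed
  finally have E2: "C $$ (y, x) * sg (qbit n x r) * sg (qbit n x s) = ?K * sg (dotb n (a r) (b s))" .
  show ?thesis using cancel_sg[OF K trans[OF sym[OF E1] E2]] .
qed

lemma XX: assumes r: "r < n" and s: "s < n" shows "dotb n (c s) (d r) = dotb n (c r) (d s)"
proof -
  obtain x where x: "x < 2^n" and nz: "C $$ (0, x) \<noteq> 0" using row_nz[of 0] by auto
  define y where "y = xorv n (xorv n 0 (d s)) (d r)"
  have yl: "y < 2^n" by (simp add: y_def)
  have y1: "xorv n (xorv n y (d r)) (d s) = 0" by (simp add: y_def)
  have y2: "xorv n (xorv n y (d s)) (d r) = 0" using y1 xorv_comm by metis
  let ?K = "sg (h r) * php n (c r) (d r) * sg (h s) * php n (c s) (d s) * sg (dotb n (c r) (qbit n y)) * sg (dotb n (c s) (qbit n y)) * C $$ (0, x)"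
  have K: "?K \<noteq> 0" using nz by simp
  have xs: "xorv n x (e s) < 2^n" "xorv n x (e r) < 2^n" by simp_all
  have "C $$ (y, xorv n (xorv n x (e s)) (e r)) = sg (h r) * php n (c r) (d r) * sg (dotb n (c r) (qbit n y)) * C $$ (xorv n y (d r), xorv n x (e s))"
    by (rule RX[OF r yl xs(1)])
  also have "\<dots> = ?K * sg (dotb n (c s) (d r))"
  proof -
    have "C $$ (xorv n y (d r), xorv n x (e s)) = sg (h s) * php n (c s) (d s) * sg (dotb n (c s) (qbit n (xorv n y (d r)))) * C $$ (0, x)"
      using RX[OF s _ x, of "xorv n y (d r)"] y1 by simp
    then show ?thesis by (simp add: sg_dotb_xorv mult_ac)
  qed
  finally have E1: "C $$ (y, xorv n (xorv n x (e s)) (e r)) = ?K * sg (dotb n (c s) (d r))" .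
  have "C $$ (y, xorv n (xorv n x (e s)) (e r)) = C $$ (y, xorv n (xorv n x (e r)) (e s))"
    by (simp add: xorv_comm)
  also have "\<dots> = sg (h s) * php n (c s) (d s) * sg (dotb n (c s) (qbit n y)) * C $$ (xorv n y (d s), xorv n x (e r))"
    by (rule RX[OF s yl xs(2)])
  also have "\<dots> = ?K * sg (dotb n (c r) (d s))"
  proof -
    have "C $$ (xorv n y (d s), xorv n x (e r)) = sg (h r) * php n (c r) (d r) * sg (dotb n (c r) (qbit n (xorv n y (d s)))) * C $$ (0, x)"
      using RX[OF r _ x, of "xorv n y (d s)"] y2 by simp
    then show ?thesis by (simp add: sg_dotb_xorv mult_ac)
  qed
  finally have E2: "C $$ (y, xorv n (xorv n x (e s)) (e r)) = ?K * sg (dotb n (c r) (d s))" .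
  show ?thesis using cancel_sg[OF K trans[OF sym[OF E1] E2]] .
qed

lemma ZX: assumes r: "r < n" and s: "s < n" shows "(dotb n (c s) (b r) \<noteq> dotb n (a r) (d s)) = (r = s)"
proof -
  obtain x where x: "x < 2^n" and nz: "C $$ (0, x) \<noteq> 0" using row_nz[of 0] by auto
  define y where "y = xorv n (xorv n 0 (d s)) (b r)"
  have yl: "y < 2^n" by (simp add: y_def)
  have y1: "xorv n (xorv n y (b r)) (d s) = 0" by (simp add: y_def)
  have y2: "xorv n (xorv n y (d s)) (b r) = 0" using y1 xorv_comm by metis
  let ?K = "sg (f r) * php n (a r) (b r) * sg (h s) * php n (c s) (d s) * sg (dotb n (a r) (qbit n y)) * sg (dotb n (c s) (qbit n y)) * C $$ (0, x)"
  have K: "?K \<noteq> 0" using nz by simp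
  have xs: "xorv n x (e s) < 2^n" by simp
  have "C $$ (y, xorv n x (e s)) * sg (qbit n (xorv n x (e s)) r) = sg (f r) * php n (a r) (b r) * sg (dotb n (a r) (qbit n y)) * C $$ (xorv n y (b r), xorv n x (e s))"
    by (rule RZ[OF r yl xs])
  also have "\<dots> = ?K * sg (dotb n (c s) (b r))"
  proof -
    have "C $$ (xorv n y (b r), xorv n x (e s)) = sg (h s) * php n (c s) (d s) * sg (dotb n (c s) (qbit n (xorv n y (b r)))) * C $$ (0, x)"
      using RX[OF s _ x, of "xorv n y (b r)"] y1 by simp
    then show ?thesis by (simp add: sg_dotb_xorv mult_ac)
  qed
  finally have E1: "C $$ (y, xorv n x (e s)) * sg (qbit n (xorv n x (e s)) r) = ?K * sg (dotb n (c s) (b r))" .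
  have "C $$ (y, xorv n x (e s)) * sg (qbit n (xorv n x (e s)) r) = sg (r = s) * (sg (h s) * php n (c s) (d s) * sg (dotb n (c s) (qbit n y)) * (C $$ (xorv n y (d s), x) * sg (qbit n x r)))"
  proof -
    have q: "qbit n (xorv n x (e s)) r = (qbit n x r \<noteq> (r = s))" using r by (simp add: e_def)
    show ?thesis unfolding q sg_xor RX[OF s yl x] by (simp add: mult_ac)
  qed
  also have "\<dots> = ?K * (sg (r = s) * sg (dotb n (a r) (d s)))"
  proof -
    have "C $$ (xorv n y (d s), x) * sg (qbit n x r) = sg (f r) * php n (a r) (b r) * sg (dotb n (a r) (qbit n (xorv n y (d s)))) * C $$ (0, x)"
      using RZ[OF r _ x, of "xorv n y (d s)"] y2 by simp
    then show ?thesis by (simp add: sg_dotb_xorv mult_ac)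
  qed
  finally have E2: "C $$ (y, xorv n x (e s)) * sg (qbit n (xorv n x (e s)) r) = ?K * sg ((r = s) \<noteq> dotb n (a r) (d s))"
    by (simp only: sg_xor)
  have "dotb n (c s) (b r) = ((r = s) \<noteq> dotb n (a r) (d s))" using cancel_sg[OF K trans[OF sym[OF E1] E2]] .
  then show ?thesis by auto
qed

end


lemma php_sq2: "php n a b * (php n a b * z) = sg (dotb n a b) * z"
  by (simp add: php_sq mult.assoc[symmetric])

lemma sum_xorv_mult: "(\<Sum>y<2^n. g y * H (xorv n y v)) = (\<Sum>y<(2::nat)^n. g (xorv n y v) * (H y :: complex))"
proof -
  have "(\<Sum>y<2^n. g y * H (xorv n y v)) = (\<Sum>y<(2::nat)^n. g (xorv n y v) * H (xorv n (xorv n y v) v))"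
    by (rule sum_xorv[symmetric])
  also have "\<dots> = (\<Sum>y<2^n. g (xorv n y v) * H y)" by (rule sum.cong) auto
  finally show ?thesis .
qed

context twin begin

definition Hs :: "nat \<Rightarrow> nat \<Rightarrow> nat \<Rightarrow> nat \<Rightarrow> complex" where
  "Hs l i j y = (\<Sum>x<2^n. sg (dotb n (qbit n i) (qbit n x)) * C $$ (y, x) * C $$ (xorv n y (qbit n l), xorv n x (qbit n j)))"

definition G :: "nat \<Rightarrow> nat \<Rightarrow> nat \<Rightarrow> nat \<Rightarrow> complex" where
  "G k l i j = (\<Sum>y<2^n. sg (dotb n (qbit n k) (qbit n y)) * Hs l i j y)"

lemma HsZ: assumes r: "r < n" and y: "y < 2^n"
  shows "sg (qbit n j r) * Hs l i j y = sg (dotb n (a r) (b r)) * sg (dotb n (a r) (qbit n l)) * Hs l i j (xorv n y (b r))"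
proof -
  have trm: "sg (qbit n j r) * (sg (dotb n (qbit n i) (qbit n x)) * C $$ (y, x) * C $$ (xorv n y (qbit n l), xorv n x (qbit n j)))
     = sg (dotb n (a r) (b r)) * sg (dotb n (a r) (qbit n l)) * (sg (dotb n (qbit n i) (qbit n x)) * C $$ (xorv n y (b r), x) * C $$ (xorv n (xorv n y (b r)) (qbit n l), xorv n x (qbit n j)))"
    if x: "x < 2^n" for x
  proof -
    have sgj: "sg (qbit n j r) = sg (qbit n x r) * sg (qbit n (xorv n x (qbit n j)) r)"
      using r by (simp only: qbit_xorv sg_xor) simp
    have e1: "C $$ (y, x) * sg (qbit n x r) = sg (f r) * php n (a r) (b r) * sg (dotb n (a r) (qbit n y)) * C $$ (xorv n y (b r), x)"
      by (rule RZ[OF r y x])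
    have e2: "C $$ (xorv n y (qbit n l), xorv n x (qbit n j)) * sg (qbit n (xorv n x (qbit n j)) r) = sg (f r) * php n (a r) (b r) * sg (dotb n (a r) (qbit n (xorv n y (qbit n l)))) * C $$ (xorv n (xorv n y (qbit n l)) (b r), xorv n x (qbit n j))"
      by (rule RZ[OF r]) auto
    have "sg (qbit n j r) * (sg (dotb n (qbit n i) (qbit n x)) * C $$ (y, x) * C $$ (xorv n y (qbit n l), xorv n x (qbit n j)))
       = sg (dotb n (qbit n i) (qbit n x)) * (C $$ (y, x) * sg (qbit n x r)) * (C $$ (xorv n y (qbit n l), xorv n x (qbit n j)) * sg (qbit n (xorv n x (qbit n j)) r))"
      unfolding sgj by (simp only: mult_ac)
    also have "\<dots> = sg (dotb n (qbit n i) (qbit n x)) * (sg (f r) * php n (a r) (b r) * sg (dotb n (a r) (qbit n y)) * C $$ (xorv n y (b r), x)) * (sg (f r) * php n (a r) (b r) * sg (dotb n (a r) (qbit n (xorv n y (qbit n l)))) * C $$ (xorv n (xorv n y (qbit n l)) (b r), xorv n x (qbit n j)))"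
      unfolding e1 e2 ..
    also have "\<dots> = sg (dotb n (a r) (b r)) * sg (dotb n (a r) (qbit n l)) * (sg (dotb n (qbit n i) (qbit n x)) * C $$ (xorv n y (b r), x) * C $$ (xorv n (xorv n y (b r)) (qbit n l), xorv n x (qbit n j)))"
      by (simp add: sg_dotb_xorv xorv_comm[of n y "qbit n l"] mult_ac php_sq2 php_sq)
    finally show ?thesis .
  qed
  have "sg (qbit n j r) * Hs l i j y = (\<Sum>x<2^n. sg (qbit n j r) * (sg (dotb n (qbit n i) (qbit n x)) * C $$ (y, x) * C $$ (xorv n y (qbit n l), xorv n x (qbit n j))))"
    unfolding Hs_def by (rule sum_distrib_left)
  also have "\<dots> = (\<Sum>x<2^n. sg (dotb n (a r) (b r)) * sg (dotb n (a r) (qbit n l)) * (sg (dotb n (qbit n i) (qbit n x)) * C $$ (xorv n y (b r), x) * C $$ (xorv n (xorv n y (b r)) (qbit n l), xorv n x (qbit n j))))"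
    by (rule sum.cong) (auto simp: trm)
  also have "\<dots> = sg (dotb n (a r) (b r)) * sg (dotb n (a r) (qbit n l)) * Hs l i j (xorv n y (b r))"
    unfolding Hs_def by (rule sum_distrib_left[symmetric])
  finally show ?thesis .
qed

lemma GZ: assumes r: "r < n"
  shows "sg (qbit n j r) * G k l i j = sg (dotb n (a r) (b r)) * sg (dotb n (a r) (qbit n l)) * sg (dotb n (qbit n k) (b r)) * G k l i j"
proof -
  let ?K = "sg (dotb n (a r) (b r)) * sg (dotb n (a r) (qbit n l))"
  have "sg (qbit n j r) * G k l i j = (\<Sum>y<2^n. sg (dotb n (qbit n k) (qbit n y)) * (sg (qbit n j r) * Hs l i j y))"
    unfolding G_def sum_distrib_left by (simp only: mult_ac)
  also have "\<dots> = (\<Sum>y<2^n. ?K * (sg (dotb n (qbit n k) (qbit n y)) * Hs l i j (xorv n y (b r))))"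
    by (rule sum.cong) (auto simp: HsZ[OF r] mult_ac)
  also have "\<dots> = ?K * (\<Sum>y<2^n. sg (dotb n (qbit n k) (qbit n y)) * Hs l i j (xorv n y (b r)))"
    by (rule sum_distrib_left[symmetric])
  also have "(\<Sum>y<2^n. sg (dotb n (qbit n k) (qbit n y)) * Hs l i j (xorv n y (b r)))
      = (\<Sum>y<2^n. sg (dotb n (qbit n k) (qbit n (xorv n y (b r)))) * Hs l i j y)"
    by (rule sum_xorv_mult)
  also have "\<dots> = sg (dotb n (qbit n k) (b r)) * G k l i j"
    unfolding G_def sum_distrib_left by (rule sum.cong) (auto simp: sg_dotb_xorv mult_ac)
  finally show ?thesis by (simp only: mult_ac)
qed

lemma HsX: assumes r: "r < n" and y: "y < 2^n"
  shows "Hs l i j y = sg (qbit n i r) * sg (dotb n (c r) (d r)) * sg (dotb n (c r) (qbit n l)) * Hs l i j (xorv n y (d r))"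
proof -
  let ?F = "\<lambda>x. sg (dotb n (qbit n i) (qbit n x)) * C $$ (y, x) * C $$ (xorv n y (qbit n l), xorv n x (qbit n j))"
  have trm: "?F (xorv n x (e r))
     = sg (qbit n i r) * sg (dotb n (c r) (d r)) * sg (dotb n (c r) (qbit n l)) * (sg (dotb n (qbit n i) (qbit n x)) * C $$ (xorv n y (d r), x) * C $$ (xorv n (xorv n y (d r)) (qbit n l), xorv n x (qbit n j)))"
    if x: "x < 2^n" for x
  proof -
    have si: "sg (dotb n (qbit n i) (qbit n (xorv n x (e r)))) = sg (dotb n (qbit n i) (qbit n x)) * sg (qbit n i r)"
      using r by (simp only: sg_dotb_xorv e_def dotb_ind2)
    have e1: "C $$ (y, xorv n x (e r)) = sg (h r) * php n (c r) (d r) * sg (dotb n (c r) (qbit n y)) * C $$ (xorv n y (d r), x)"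
      by (rule RX[OF r y x])
    have e2: "C $$ (xorv n y (qbit n l), xorv n (xorv n x (qbit n j)) (e r)) = sg (h r) * php n (c r) (d r) * sg (dotb n (c r) (qbit n (xorv n y (qbit n l)))) * C $$ (xorv n (xorv n y (qbit n l)) (d r), xorv n x (qbit n j))"
      by (rule RX[OF r]) auto
    have "?F (xorv n x (e r)) = sg (dotb n (qbit n i) (qbit n x)) * sg (qbit n i r) * C $$ (y, xorv n x (e r)) * C $$ (xorv n y (qbit n l), xorv n (xorv n x (qbit n j)) (e r))"
      unfolding si by (simp only: xorv_comm[of n x "e r"])
    also have "\<dots> = sg (dotb n (qbit n i) (qbit n x)) * sg (qbit n i r) * (sg (h r) * php n (c r) (d r) * sg (dotb n (c r) (qbit n y)) * C $$ (xorv n y (d r), x)) * (sg (h r) * php n (c r) (d r) * sg (dotb n (c r) (qbit n (xorv n y (qbit n l)))) * C $$ (xorv n (xorv n y (qbit n l)) (d r), xorv n x (qbit n j)))"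
      unfolding e1 e2 ..
    also have "\<dots> = sg (qbit n i r) * sg (dotb n (c r) (d r)) * sg (dotb n (c r) (qbit n l)) * (sg (dotb n (qbit n i) (qbit n x)) * C $$ (xorv n y (d r), x) * C $$ (xorv n (xorv n y (d r)) (qbit n l), xorv n x (qbit n j)))"
      by (simp add: sg_dotb_xorv xorv_comm[of n y "qbit n l"] mult_ac php_sq2 php_sq)
    finally show ?thesis .
  qed
  have "Hs l i j y = (\<Sum>x<2^n. ?F (xorv n x (e r)))"
    unfolding Hs_def by (rule sum_xorv[symmetric])
  also have "\<dots> = (\<Sum>x<2^n. sg (qbit n i r) * sg (dotb n (c r) (d r)) * sg (dotb n (c r) (qbit n l)) * (sg (dotb n (qbit n i) (qbit n x)) * C $$ (xorv n y (d r), x) * C $$ (xorv n (xorv n y (d r)) (qbit n l), xorv n x (qbit n j))))"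
    by (rule sum.cong) (auto simp: trm)
  also have "\<dots> = sg (qbit n i r) * sg (dotb n (c r) (d r)) * sg (dotb n (c r) (qbit n l)) * Hs l i j (xorv n y (d r))"
    unfolding Hs_def by (rule sum_distrib_left[symmetric])
  finally show ?thesis .
qed

lemma GX: assumes r: "r < n"
  shows "G k l i j = sg (qbit n i r) * sg (dotb n (c r) (d r)) * sg (dotb n (c r) (qbit n l)) * sg (dotb n (qbit n k) (d r)) * G k l i j"
proof -
  let ?K = "sg (qbit n i r) * sg (dotb n (c r) (d r)) * sg (dotb n (c r) (qbit n l))"
  have "G k l i j = (\<Sum>y<2^n. ?K * (sg (dotb n (qbit n k) (qbit n y)) * Hs l i j (xorv n y (d r))))"
    unfolding G_def
  proof (rule sum.cong[OF refl])
    fix y assume "y \<in> {..<(2::nat)^n}"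
    then have "y < 2^n" by simp
    then show "sg (dotb n (qbit n k) (qbit n y)) * Hs l i j y = ?K * (sg (dotb n (qbit n k) (qbit n y)) * Hs l i j (xorv n y (d r)))"
      by (subst HsX[OF r, of y]) (simp_all only: mult_ac)
  qed
  also have "\<dots> = ?K * (\<Sum>y<2^n. sg (dotb n (qbit n k) (qbit n y)) * Hs l i j (xorv n y (d r)))"
    by (rule sum_distrib_left[symmetric])
  also have "(\<Sum>y<2^n. sg (dotb n (qbit n k) (qbit n y)) * Hs l i j (xorv n y (d r)))
      = (\<Sum>y<2^n. sg (dotb n (qbit n k) (qbit n (xorv n y (d r)))) * Hs l i j y)"
    by (rule sum_xorv_mult)
  also have "\<dots> = sg (dotb n (qbit n k) (d r)) * G k l i j"
    unfolding G_def sum_distrib_left by (rule sum.cong) (auto simp: sg_dotb_xorv mult_ac)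
  finally show ?thesis by (simp only: mult_ac)
qed

lemma G_constr: assumes "G k l i j \<noteq> 0" "r < n"
  shows "qbit n j r = (dotb n (a r) (b r) \<noteq> (dotb n (a r) (qbit n l) \<noteq> dotb n (qbit n k) (b r)))"
    and "qbit n i r = (dotb n (c r) (d r) \<noteq> (dotb n (c r) (qbit n l) \<noteq> dotb n (qbit n k) (d r)))"
proof -
  have "G k l i j * sg (qbit n j r) = G k l i j * sg (dotb n (a r) (b r) \<noteq> (dotb n (a r) (qbit n l) \<noteq> dotb n (qbit n k) (b r)))"
    using GZ[OF assms(2), of j k l i] by (simp only: sg_xor mult_ac)
  then show "qbit n j r = (dotb n (a r) (b r) \<noteq> (dotb n (a r) (qbit n l) \<noteq> dotb n (qbit n k) (b r)))"
    using cancel_sg[OF assms(1)] by blast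
  let ?Y = "sg (dotb n (c r) (d r)) * sg (dotb n (c r) (qbit n l)) * sg (dotb n (qbit n k) (d r)) * G k l i j"
  have g: "G k l i j = sg (qbit n i r) * ?Y"
    using GX[OF assms(2), of k l i j] by (simp only: mult.assoc)
  have "sg (qbit n i r) * G k l i j = sg (qbit n i r) * (sg (qbit n i r) * ?Y)"
    using g by (rule arg_cong[where f="\<lambda>z. sg (qbit n i r) * z"])
  also have "\<dots> = ?Y" by (rule sg_sq2)
  finally have "G k l i j * sg (qbit n i r) = G k l i j * sg (dotb n (c r) (d r) \<noteq> (dotb n (c r) (qbit n l) \<noteq> dotb n (qbit n k) (d r)))"
    by (simp only: sg_xor mult_ac)
  then show "qbit n i r = (dotb n (c r) (d r) \<noteq> (dotb n (c r) (qbit n l) \<noteq> dotb n (qbit n k) (d r)))"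
    using cancel_sg[OF assms(1)] by blast
qed

end


definition omg :: "nat \<Rightarrow> (nat \<Rightarrow> bool) \<Rightarrow> (nat \<Rightarrow> bool) \<Rightarrow> bool" where
  "omg n u v = (dotb n u (\<lambda>q. v (n + q)) \<noteq> dotb n (\<lambda>q. u (n + q)) v)"

definition piv :: "nat \<Rightarrow> nat \<Rightarrow> nat" where "piv n t = (if t < n then t + n else t - n)"

definition gv :: "nat \<Rightarrow> (nat \<Rightarrow> nat \<Rightarrow> bool) \<Rightarrow> (nat \<Rightarrow> nat \<Rightarrow> bool) \<Rightarrow> (nat \<Rightarrow> nat \<Rightarrow> bool) \<Rightarrow> (nat \<Rightarrow> nat \<Rightarrow> bool) \<Rightarrow> nat \<Rightarrow> bool" where
  "gv n a b c d t = (if t < n then dotb n (c t) (d t) else dotb n (a (t - n)) (b (t - n)))"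

definition phiv where
  "phiv n a b c d K = (\<lambda>t. gv n a b c d t \<noteq> omg n (\<lambda>q. symp_S n a b c d q (piv n t)) K)"

definition psiv where
  "psiv n a b c d J = (\<lambda>r. f2_mulv (2 * n) (symp_S n a b c d) (\<lambda>t. J t \<noteq> gv n a b c d t) r)"

lemma dotb_cong_le: "(\<And>r. r < m \<Longrightarrow> u r = u' r) \<Longrightarrow> (\<And>r. r < m \<Longrightarrow> v r = v' r) \<Longrightarrow> m \<le> m' \<Longrightarrow> True"
  by simp

lemma omg_mulv: "omg n u (f2_mulv N M v) = dotb N (\<lambda>t. omg n u (\<lambda>q. M q t)) v"
proof -
  have "omg n u (f2_mulv N M v) = (dotb n u (\<lambda>q. dotb N (M (n + q)) v) \<noteq> dotb n (\<lambda>q. u (n + q)) (\<lambda>q. dotb N (M q) v))"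
  proof -
    have fm: "f2_mulv N M v = (\<lambda>q. dotb N (M q) v)" by (rule ext) (simp add: f2_mulv_dotb)
    show ?thesis unfolding fm omg_def ..
  qed
  also have "\<dots> = (dotb N (\<lambda>t. dotb n u (\<lambda>q. M (n + q) t)) v \<noteq> dotb N (\<lambda>t. dotb n (\<lambda>q. u (n + q)) (\<lambda>q. M q t)) v)"
    by (simp only: dotb_swap)
  also have "\<dots> = dotb N (\<lambda>t. dotb n u (\<lambda>q. M (n + q) t) \<noteq> dotb n (\<lambda>q. u (n + q)) (\<lambda>q. M q t)) v"
    by (simp only: dotb_xor1)
  also have "\<dots> = dotb N (\<lambda>t. omg n u (\<lambda>q. M q t)) v"
    by (simp add: omg_def)
  finally show ?thesis .
qed

locale sympl =
  fixes n :: nat and a b c d :: "nat \<Rightarrow> nat \<Rightarrow> bool"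
  assumes ZZ: "\<And>r s. r < n \<Longrightarrow> s < n \<Longrightarrow> dotb n (a s) (b r) = dotb n (a r) (b s)"
    and XX: "\<And>r s. r < n \<Longrightarrow> s < n \<Longrightarrow> dotb n (c s) (d r) = dotb n (c r) (d s)"
    and ZX: "\<And>r s. r < n \<Longrightarrow> s < n \<Longrightarrow> (dotb n (c s) (b r) \<noteq> dotb n (a r) (d s)) = (r = s)"
begin

abbreviation "SS \<equiv> symp_S n a b c d"
abbreviation "cl t \<equiv> (\<lambda>q. SS q t)"

lemma omg_col: assumes "s < 2 * n" "t < 2 * n" shows "omg n (cl s) (cl t) = (piv n s = t)"
proof -
  have A: "omg n (cl s) (cl t) = (dotb n (\<lambda>q. cl s q) (\<lambda>q. cl t (n + q)) \<noteq> dotb n (\<lambda>q. cl s (n + q)) (\<lambda>q. cl t q))"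
    by (simp add: omg_def)
  show ?thesis
  proof (cases "s < n")
    case s: True
    show ?thesis
    proof (cases "t < n")
      case t: True
      have "omg n (cl s) (cl t) = (dotb n (a s) (b t) \<noteq> dotb n (b s) (a t))"
        unfolding A using s t by (intro arg_cong2[where f="(\<noteq>)"] dotb_cong) (auto simp: symp_S_def)
      then show ?thesis using ZZ[OF s t] s t by (simp add: piv_def dotb_comm[of n "b s"])
    next
      case t: False
      then obtain t' where t': "t = n + t'" "t' < n" using assms by (metis add_diff_inverse_nat add_less_cancel_left mult_2)
      have "omg n (cl s) (cl t) = (dotb n (a s) (d t') \<noteq> dotb n (b s) (c t'))"
        unfolding A using s t' by (intro arg_cong2[where f="(\<noteq>)"] dotb_cong) (auto simp: symp_S_def)
      then show ?thesis using ZX[OF s t'(2)] s t' by (auto simp: piv_def dotb_comm[of n "b s"])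
    qed
  next
    case s: False
    then obtain s' where s': "s = n + s'" "s' < n" using assms by (metis add_diff_inverse_nat add_less_cancel_left mult_2)
    show ?thesis
    proof (cases "t < n")
      case t: True
      have "omg n (cl s) (cl t) = (dotb n (c s') (b t) \<noteq> dotb n (d s') (a t))"
        unfolding A using s' t by (intro arg_cong2[where f="(\<noteq>)"] dotb_cong) (auto simp: symp_S_def)
      then show ?thesis using ZX[OF t s'(2)] s' t by (auto simp: piv_def dotb_comm[of n "d s'"])
    next
      case t: False
      then obtain t' where t': "t = n + t'" "t' < n" using assms by (metis add_diff_inverse_nat add_less_cancel_left mult_2)
      have "omg n (cl s) (cl t) = (dotb n (c s') (d t') \<noteq> dotb n (d s') (c t'))"
        unfolding A using s' t' by (intro arg_cong2[where f="(\<noteq>)"] dotb_cong) (auto simp: symp_S_def)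
      then show ?thesis using XX[OF t'(2) s'(2)] s' t' by (auto simp: piv_def dotb_comm[of n "d s'"])
    qed
  qed
qed

lemma piv_lt: "t < 2 * n \<Longrightarrow> piv n t < 2 * n" by (auto simp: piv_def)
lemma piv_piv: "t < 2 * n \<Longrightarrow> piv n (piv n t) = t" by (auto simp: piv_def)

lemma phi_psi: assumes t: "t < 2 * n" shows "phiv n a b c d (psiv n a b c d J) t = J t"
proof -
  let ?J' = "\<lambda>t. J t \<noteq> gv n a b c d t"
  have "omg n (cl (piv n t)) (psiv n a b c d J) = dotb (2 * n) (\<lambda>s. omg n (cl (piv n t)) (cl s)) ?J'"
    unfolding psiv_def by (rule omg_mulv)
  also have "\<dots> = dotb (2 * n) (\<lambda>s. s = t) ?J'"
    using t by (intro dotb_cong) (auto simp: omg_col piv_lt piv_piv)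
  also have "\<dots> = ?J' t" using t by (rule dotb_ind)
  finally show ?thesis unfolding phiv_def by auto
qed

definition trunc :: "nat \<Rightarrow> (nat \<Rightarrow> bool) \<Rightarrow> nat \<Rightarrow> bool" where "trunc N v = (\<lambda>t. t < N \<and> v t)"

lemma psiv_cong: "(\<And>t. t < 2 * n \<Longrightarrow> J t = J' t) \<Longrightarrow> psiv n a b c d J r = psiv n a b c d J' r"
  unfolding psiv_def f2_mulv_dotb by (rule dotb_cong) auto

lemma phiv_cong: "(\<And>t. t < 2 * n \<Longrightarrow> K t = K' t) \<Longrightarrow> phiv n a b c d K t = phiv n a b c d K' t"
  unfolding phiv_def omg_def by (intro arg_cong2[where f="(\<noteq>)"] refl dotb_cong) auto

definition VV :: "(nat \<Rightarrow> bool) set" where "VV = {v. \<forall>t. v t \<longrightarrow> t < 2 * n}"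

lemma VV_finite: "finite VV"
proof -
  have "VV \<subseteq> (\<lambda>A t. t \<in> A) ` Pow {..<2 * n}"
  proof
    fix v assume "v \<in> VV"
    then have "v = (\<lambda>t. t \<in> {t. v t})" "{t. v t} \<in> Pow {..<2 * n}" by (auto simp: VV_def)
    then show "v \<in> (\<lambda>A t. t \<in> A) ` Pow {..<2 * n}" by blast
  qed
  then show ?thesis by (rule finite_subset) simp
qed

lemma psi_phi: assumes "t < 2 * n" shows "psiv n a b c d (phiv n a b c d K) t = K t"
proof -
  let ?Psi = "\<lambda>v. trunc (2 * n) (psiv n a b c d v)"
  let ?Phi = "\<lambda>v. trunc (2 * n) (phiv n a b c d v)"
  have PP: "?Phi (?Psi v) = v" if "v \<in> VV" for v
  proof
    fix t
    show "?Phi (?Psi v) t = v t"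
    proof (cases "t < 2 * n")
      case True
      have "phiv n a b c d (?Psi v) t = phiv n a b c d (psiv n a b c d v) t"
        by (rule phiv_cong) (simp add: trunc_def)
      then show ?thesis using True phi_psi[OF True] by (simp add: trunc_def)
    next
      case False then show ?thesis using that by (auto simp: trunc_def VV_def)
    qed
  qed
  have inj: "inj_on ?Psi VV" by (rule inj_on_inverseI[where g="?Phi"]) (rule PP)
  have sub: "?Psi ` VV \<subseteq> VV" by (auto simp: VV_def trunc_def)
  have eq: "?Psi ` VV = VV" by (rule endo_inj_surj[OF VV_finite sub inj])
  have v0: "trunc (2 * n) K \<in> VV" by (auto simp: VV_def trunc_def)
  then obtain w where w: "w \<in> VV" "trunc (2 * n) K = ?Psi w" using eq by blast
  have "?Phi (trunc (2 * n) K) = w" using w PP by simp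
  then have "?Psi (?Phi (trunc (2 * n) K)) = trunc (2 * n) K" using w by simp
  then have "?Psi (?Phi (trunc (2 * n) K)) t = trunc (2 * n) K t" by simp
  moreover have "psiv n a b c d (phiv n a b c d K) t = psiv n a b c d (?Phi (trunc (2 * n) K)) t"
  proof (rule psiv_cong)
    fix t' assume t': "t' < 2 * n"
    have "phiv n a b c d K t' = phiv n a b c d (trunc (2 * n) K) t'" by (rule phiv_cong) (simp add: trunc_def)
    then show "phiv n a b c d K t' = ?Phi (trunc (2 * n) K) t'" using t' by (simp add: trunc_def)
  qed
  ultimately show ?thesis using assms by (simp add: trunc_def)
qed

lemma solve: assumes "\<And>t. t < 2 * n \<Longrightarrow> J t = phiv n a b c d K t" and t: "t < 2 * n"
  shows "K t = (f2_mulv (2 * n) SS J t \<noteq> f2_mulv (2 * n) SS (gv n a b c d) t)"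
proof -
  have "K t = psiv n a b c d (phiv n a b c d K) t" using psi_phi[OF t] by simp
  also have "\<dots> = psiv n a b c d J t" by (rule psiv_cong) (simp add: assms)
  also have "\<dots> = (f2_mulv (2 * n) SS J t \<noteq> f2_mulv (2 * n) SS (gv n a b c d) t)"
    unfolding psiv_def f2_mulv_dotb by (rule dotb_xor2)
  finally show ?thesis .
qed

end


lemma bit_div_pow: "bit ((z::nat) div 2 ^ n) m = bit z (n + m)"
  by (simp add: bit_iff_odd div_mult2_eq power_add)
lemma bit_mod_pow: "bit ((z::nat) mod 2 ^ n) m = (m < n \<and> bit z m)"
  by (metis bit_take_bit_iff take_bit_eq_mod)

lemma qbit_split: assumes "q < 2 * n"
  shows "qbit (2 * n) z q = (if q < n then qbit n (z div 2 ^ n) q else qbit n (z mod 2 ^ n) (q - n))"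
proof (cases "q < n")
  case True
  have "2 * n - 1 - q = n + (n - 1 - q)" using True by simp
  then show ?thesis using True by (simp add: qbit_bit bit_div_pow)
next
  case False
  have "2 * n - 1 - q = n - 1 - (q - n)" "n - 1 - (q - n) < n" using False assms by auto
  then show ?thesis using False by (simp add: qbit_bit bit_mod_pow)
qed

definition cidx :: "nat \<Rightarrow> nat \<Rightarrow> nat \<Rightarrow> nat" where "cidx n X Y = X * 2 ^ n + Y"

lemma cidx_less: "X < 2 ^ n \<Longrightarrow> Y < 2 ^ n \<Longrightarrow> cidx n X Y < 2 ^ (2 * n)"
proof -
  assume "X < 2 ^ n" "Y < 2 ^ n"
  then have "X * 2 ^ n + Y < (X + 1) * 2 ^ n" by simp
  also have "\<dots> \<le> 2 ^ n * 2 ^ n" using \<open>X < 2 ^ n\<close> by (intro mult_right_mono) auto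
  also have "\<dots> = 2 ^ (2 * n)" by (simp add: power_add[symmetric] mult_2)
  finally show ?thesis by (simp add: cidx_def)
qed
lemma cidx_div[simp]: "Y < 2 ^ n \<Longrightarrow> cidx n X Y div 2 ^ n = X" by (simp add: cidx_def)
lemma cidx_mod[simp]: "Y < 2 ^ n \<Longrightarrow> cidx n X Y mod 2 ^ n = Y" by (simp add: cidx_def)
lemma div_less2: "(z::nat) < 2 ^ (2 * n) \<Longrightarrow> z div 2 ^ n < 2 ^ n"
  by (simp add: less_mult_imp_div_less mult_2 power_add)
lemma cidx_eta: "cidx n (z div 2 ^ n) (z mod 2 ^ n) = (z::nat)" by (metis cidx_def div_mult_mod_eq)

lemma sum_split: "(\<Sum>z<2 ^ (2 * n). F z) = (\<Sum>X<2 ^ n. \<Sum>Y<2 ^ n. (F (cidx n X Y) :: 'a :: comm_monoid_add))"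
proof -
  have "(\<Sum>X<2 ^ n. \<Sum>Y<2 ^ n. F (cidx n X Y)) = (\<Sum>p\<in>{..<2 ^ n} \<times> {..<2 ^ n}. F (cidx n (fst p) (snd p)))"
    unfolding sum.cartesian_product by (simp add: case_prod_beta)
  also have "\<dots> = (\<Sum>z<2 ^ (2 * n). F z)"
    by (rule sum.reindex_bij_witness[where i="\<lambda>z. (z div 2 ^ n, z mod 2 ^ n)" and j="\<lambda>p. cidx n (fst p) (snd p)"])
       (auto simp: cidx_less div_less2 cidx_eta)
  finally show ?thesis by simp
qed

lemma prod_split_add: "(\<Prod>r<(n::nat) + m. F r) = (\<Prod>r<n. F r) * (\<Prod>r<m. (F (n + r) :: 'a::comm_monoid_mult))"
  by (induction m) (auto simp: mult_ac)

definition hh :: complex where "hh = complex_of_real (1 / sqrt 2)"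

lemma H2_entry: "H2 $$ (of_bool p, of_bool q) = hh * sg (p \<and> q)"
  by (cases p; cases q) (simp_all add: H2_def mat_of_rows_list_def hh_def)
lemma I2_entry: "I2 $$ (of_bool p, of_bool q) = (if p = q then 1 else 0)"
  by (cases p; cases q) (simp_all add: I2_def mat_of_rows_list_def)

lemma hadamard_carrier[simp]: "hadamard_A n \<in> carrier_mat (2 ^ (2 * n)) (2 ^ (2 * n))"
  by (simp add: hadamard_A_def)

lemma hadamard_entry: assumes "y < 2 ^ (2 * n)" "x < 2 ^ (2 * n)"
  shows "hadamard_A n $$ (y, x) = (if y mod 2 ^ n = x mod 2 ^ n then hh ^ n * sg (dotb n (qbit n (y div 2 ^ n)) (qbit n (x div 2 ^ n))) else 0)"
proof -
  let ?F = "\<lambda>r. (if r < n then H2 else I2) $$ (of_bool (qbit (2 * n) y r), of_bool (qbit (2 * n) x r))"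
  have "hadamard_A n $$ (y, x) = (\<Prod>r<n + n. ?F r)"
    unfolding hadamard_A_def using assms by (simp add: tensor_ops_entry mult_2)
  also have "\<dots> = (\<Prod>r<n. ?F r) * (\<Prod>r<n. ?F (n + r))" by (rule prod_split_add)
  also have "(\<Prod>r<n. ?F r) = (\<Prod>r<n. hh * sg (qbit n (y div 2 ^ n) r \<and> qbit n (x div 2 ^ n) r))"
    by (rule prod.cong) (auto simp: qbit_split H2_entry)
  also have "\<dots> = hh ^ n * sg (dotb n (qbit n (y div 2 ^ n)) (qbit n (x div 2 ^ n)))"
    by (simp add: prod.distrib sg_dotb)
  also have "(\<Prod>r<n. ?F (n + r)) = (\<Prod>r<n. if qbit n (y mod 2 ^ n) r = qbit n (x mod 2 ^ n) r then 1 else 0)"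
    by (rule prod.cong) (auto simp: qbit_split I2_entry)
  also have "\<dots> = (if y mod 2 ^ n = x mod 2 ^ n then 1 else 0)"
  proof -
    have "(\<forall>r<n. qbit n (y mod 2 ^ n) r = qbit n (x mod 2 ^ n) r) \<longleftrightarrow> y mod 2 ^ n = x mod 2 ^ n"
      using qbit_eqI[of "y mod 2^n" n "x mod 2^n"] by auto
    then show ?thesis by (subst prod_if_zero) auto
  qed
  finally show ?thesis by simp
qed

definition pmat :: "nat \<Rightarrow> (nat \<Rightarrow> nat) \<Rightarrow> complex mat" where
  "pmat N g = mat (2 ^ N) (2 ^ N) (\<lambda>(y, x). of_bool (y = g x))"

lemma pmat_carrier[simp]: "pmat N g \<in> carrier_mat (2 ^ N) (2 ^ N)" by (simp add: pmat_def)

lemma pmat_mult: assumes "\<And>x. x < 2 ^ N \<Longrightarrow> g' x < 2 ^ N"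
  shows "pmat N g * pmat N g' = pmat N (g \<circ> g')"
proof (rule eq_matI)
  fix y x assume yx: "y < dim_row (pmat N (g \<circ> g'))" "x < dim_col (pmat N (g \<circ> g'))"
  then have y: "y < 2 ^ N" and x: "x < 2 ^ N" by (auto simp: pmat_def)
  have "(pmat N g * pmat N g') $$ (y, x) = (\<Sum>z<2 ^ N. pmat N g $$ (y, z) * pmat N g' $$ (z, x))"
    using y x by (intro mult_entry) auto
  also have "\<dots> = (\<Sum>z<2 ^ N. if z = g' x then of_bool (y = g z) else 0)"
    using y x by (intro sum.cong) (auto simp: pmat_def)
  also have "\<dots> = of_bool (y = g (g' x))" using assms[OF x] by (subst sum_single) auto
  finally show "(pmat N g * pmat N g') $$ (y, x) = pmat N (g \<circ> g') $$ (y, x)" using y x by (simp add: pmat_def)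
qed (auto simp: pmat_def)

lemma mult_pmat_entry: assumes M: "M \<in> carrier_mat m (2 ^ N)" and "y < m" "x < 2 ^ N" "g x < 2 ^ N"
  shows "(M * pmat N g) $$ (y, x) = M $$ (y, g x)"
proof -
  have "(M * pmat N g) $$ (y, x) = (\<Sum>z<2 ^ N. M $$ (y, z) * pmat N g $$ (z, x))"
    using assms by (intro mult_entry[OF M]) auto
  also have "\<dots> = (\<Sum>z<2 ^ N. if z = g x then M $$ (y, z) else 0)"
    using assms by (intro sum.cong) (auto simp: pmat_def)
  also have "\<dots> = M $$ (y, g x)" using assms by (subst sum_single) auto
  finally show ?thesis .
qed

lemma cnot_pmat: "cnot N cc t = pmat N (\<lambda>x. nat_of N (\<lambda>q. if q = t then (qbit N x t \<noteq> qbit N x cc) else qbit N x q))"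
  unfolding cnot_def pmat_def
  by (rule eq_matI) (auto simp: eq_nat_of_iff)


definition tcm :: "nat \<Rightarrow> nat \<Rightarrow> nat \<Rightarrow> nat" where
  "tcm n m x = nat_of (2 * n) (\<lambda>q. if n \<le> q \<and> q < n + m then (qbit (2 * n) x q \<noteq> qbit (2 * n) x (q - n)) else qbit (2 * n) x q)"

lemma tcm_less[simp]: "tcm n m x < 2 ^ (2 * n)" by (simp add: tcm_def nat_of_less)

lemma pmat_cong: "(\<And>x. x < 2 ^ N \<Longrightarrow> g x = g' x) \<Longrightarrow> pmat N g = pmat N g'"
  unfolding pmat_def by (rule eq_matI) auto

lemma foldr_cnot_mult:
  fixes M :: "complex mat"
  assumes "M \<in> carrier_mat (2 ^ (2 * n)) q"
  shows "foldr (\<lambda>r M. cnot (2 * n) r (n + r) * M) xs M = foldr (\<lambda>r M. cnot (2 * n) r (n + r) * M) xs (1\<^sub>m (2 ^ (2 * n))) * M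
     \<and> foldr (\<lambda>r M. cnot (2 * n) r (n + r) * M) xs (1\<^sub>m (2 ^ (2 * n))) \<in> carrier_mat (2 ^ (2 * n)) (2 ^ (2 * n))"
proof (induction xs)
  case Nil then show ?case using assms by simp
next
  case (Cons x xs)
  let ?F = "foldr (\<lambda>r M. cnot (2 * n) r (n + r) * M) xs (1\<^sub>m (2 ^ (2 * n)))"
  have cc: "cnot (2 * n) x (n + x) \<in> carrier_mat (2 ^ (2 * n)) (2 ^ (2 * n))" by (simp add: cnot_pmat)
  have "cnot (2 * n) x (n + x) * (?F * M) = (cnot (2 * n) x (n + x) * ?F) * M"
    using Cons.IH assms cc by (simp add: assoc_mult_mat[of _ "2 ^ (2 * n)" "2 ^ (2 * n)" _ "2 ^ (2 * n)" _ q])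
  then show ?case using Cons.IH cc by simp
qed

lemma tcm_step: assumes "m < n" "x < 2 ^ (2 * n)"
  shows "tcm n m (nat_of (2 * n) (\<lambda>q. if q = n + m then (qbit (2 * n) x (n + m) \<noteq> qbit (2 * n) x m) else qbit (2 * n) x q)) = tcm n (Suc m) x"
  unfolding tcm_def using assms by (intro nat_of_cong) (auto simp: qbit_nat_of)

lemma tcm_foldr: assumes "m \<le> n"
  shows "foldr (\<lambda>r M. cnot (2 * n) r (n + r) * M) [0..<m] (1\<^sub>m (2 ^ (2 * n))) = pmat (2 * n) (tcm n m)"
  using assms
proof (induction m)
  case 0
  have "1\<^sub>m (2 ^ (2 * n)) = pmat (2 * n) (tcm n 0)"
  proof -
    have t0: "tcm n 0 x = x" if "x < 2 ^ (2 * n)" for x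
    proof -
      have "(\<lambda>q. if n \<le> q \<and> q < n + 0 then (qbit (2 * n) x q \<noteq> qbit (2 * n) x (q - n)) else qbit (2 * n) x q) = qbit (2 * n) x"
        by (rule ext) auto
      then show ?thesis unfolding tcm_def using nat_of_qbit[OF that] by simp
    qed
    show ?thesis unfolding pmat_def by (rule eq_matI) (auto simp: t0)
  qed
  then show ?case by simp
next
  case (Suc m)
  let ?FF = "\<lambda>r M. cnot (2 * n) r (n + r) * (M :: complex mat)"
  have c: "cnot (2 * n) m (n + m) \<in> carrier_mat (2 ^ (2 * n)) (2 ^ (2 * n))" by (simp add: cnot_pmat)
  have "foldr ?FF [0..<Suc m] (1\<^sub>m (2 ^ (2 * n))) = foldr ?FF [0..<m] (cnot (2 * n) m (n + m) * 1\<^sub>m (2 ^ (2 * n)))"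
    by simp
  also have "\<dots> = foldr ?FF [0..<m] (1\<^sub>m (2 ^ (2 * n))) * (cnot (2 * n) m (n + m) * 1\<^sub>m (2 ^ (2 * n)))"
    using foldr_cnot_mult[of "cnot (2 * n) m (n + m) * 1\<^sub>m (2 ^ (2 * n))" n "2 ^ (2 * n)" "[0..<m]"] c by simp
  also have "\<dots> = pmat (2 * n) (tcm n m) * cnot (2 * n) m (n + m)" using Suc c by simp
  also have "\<dots> = pmat (2 * n) (tcm n m \<circ> (\<lambda>x. nat_of (2 * n) (\<lambda>q. if q = n + m then (qbit (2 * n) x (n + m) \<noteq> qbit (2 * n) x m) else qbit (2 * n) x q)))"
    unfolding cnot_pmat by (rule pmat_mult) (simp add: nat_of_less)
  also have "\<dots> = pmat (2 * n) (tcm n (Suc m))"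
    using Suc by (intro pmat_cong) (simp add: tcm_step)
  finally show ?case .
qed

lemma tc_pmat: "transversal_cnot n = pmat (2 * n) (tcm n n)"
  unfolding transversal_cnot_def by (rule tcm_foldr) simp

lemma tcm_cidx: assumes "X < 2 ^ n" "Y < 2 ^ n"
  shows "tcm n n (cidx n X Y) = cidx n X (xorv n Y (qbit n X))"
proof (rule qbit_eqI[where n="2 * n"])
  show "tcm n n (cidx n X Y) < 2 ^ (2 * n)" by simp
  show "cidx n X (xorv n Y (qbit n X)) < 2 ^ (2 * n)" using assms by (simp add: cidx_less)
  fix q assume q: "q < 2 * n"
  show "qbit (2 * n) (tcm n n (cidx n X Y)) q = qbit (2 * n) (cidx n X (xorv n Y (qbit n X))) q"
    using q assms by (auto simp: tcm_def qbit_nat_of qbit_split)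
qed

lemma twin_carrier[simp]: "twin_op n C \<in> carrier_mat (2 ^ (2 * n)) (2 ^ (2 * n))"
  by (simp add: twin_op_def)

lemma twin_entry: "y < 2 ^ (2 * n) \<Longrightarrow> x < 2 ^ (2 * n) \<Longrightarrow>
    twin_op n C $$ (y, x) = C $$ (y div 2 ^ n, x div 2 ^ n) * C $$ (y mod 2 ^ n, x mod 2 ^ n)"
  by (simp add: twin_op_def)


lemma dims_circ[simp]: "dim_row (hadamard_A n) = 2 ^ (2 * n)" "dim_col (hadamard_A n) = 2 ^ (2 * n)"
  "dim_row (pmat N g) = 2 ^ N" "dim_col (pmat N g) = 2 ^ N"
  "dim_row (twin_op n C) = 2 ^ (2 * n)" "dim_col (twin_op n C) = 2 ^ (2 * n)"
  by (simp_all add: hadamard_A_def pmat_def twin_op_def)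

lemma circuit_entry:
  assumes C: "C \<in> carrier_mat (2 ^ n) (2 ^ n)"
    and k: "k < 2 ^ n" and l: "l < 2 ^ n" and i: "i < 2 ^ n" and j: "j < 2 ^ n"
  shows "twin_circuit n C $$ (cidx n k l, cidx n i j) = hh ^ n * hh ^ n *
    (\<Sum>X<2 ^ n. \<Sum>X'<2 ^ n. sg (dotb n (qbit n k) (qbit n X')) * sg (dotb n (qbit n X) (qbit n i)) *
        C $$ (X', X) * C $$ (xorv n l (qbit n X'), xorv n j (qbit n X)))"
proof -
  let ?N = "2 ^ (2 * n) :: nat"
  let ?Hd = "hadamard_A n" and ?T = "pmat (2 * n) (tcm n n)" and ?W = "twin_op n C"
  let ?K = "cidx n k l" and ?J = "cidx n i j"
  have K: "?K < ?N" and J: "?J < ?N" using k l i j by (simp_all add: cidx_less)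
  have cHT: "?Hd * ?T \<in> carrier_mat ?N ?N" by (rule mult_carrier_mat[OF hadamard_carrier pmat_carrier])
  have cHTW: "?Hd * ?T * ?W \<in> carrier_mat ?N ?N" by (rule mult_carrier_mat[OF cHT twin_carrier])
  have cHTWT: "?Hd * ?T * ?W * ?T \<in> carrier_mat ?N ?N" by (rule mult_carrier_mat[OF cHTW pmat_carrier])
  have inner: "(?Hd * ?T * ?W) $$ (?K, z) = (\<Sum>X'<2 ^ n. hh ^ n * sg (dotb n (qbit n k) (qbit n X')) * ?W $$ (cidx n X' (xorv n l (qbit n X')), z))"
    if z: "z < ?N" for z
  proof -
    have "(?Hd * ?T * ?W) $$ (?K, z) = (\<Sum>w<?N. (?Hd * ?T) $$ (?K, w) * ?W $$ (w, z))"
      using K z by (intro mult_entry[OF cHT twin_carrier])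
    also have "\<dots> = (\<Sum>w<?N. ?Hd $$ (?K, tcm n n w) * ?W $$ (w, z))"
    proof (intro sum.cong refl)
      fix w assume "w \<in> {..<?N}"
      then have "(?Hd * ?T) $$ (?K, w) = ?Hd $$ (?K, tcm n n w)" using K by (intro mult_pmat_entry[OF hadamard_carrier]) auto
      then show "(?Hd * ?T) $$ (?K, w) * ?W $$ (w, z) = ?Hd $$ (?K, tcm n n w) * ?W $$ (w, z)" by (simp only:)
    qed
    also have "\<dots> = (\<Sum>X'<2 ^ n. \<Sum>Y'<2 ^ n. ?Hd $$ (?K, tcm n n (cidx n X' Y')) * ?W $$ (cidx n X' Y', z))"
      by (rule sum_split)
    also have "\<dots> = (\<Sum>X'<2 ^ n. \<Sum>Y'<2 ^ n. if Y' = xorv n l (qbit n X') then hh ^ n * sg (dotb n (qbit n k) (qbit n X')) * ?W $$ (cidx n X' Y', z) else 0)"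
    proof (intro sum.cong refl)
      fix X' Y' :: nat assume X': "X' \<in> {..<2 ^ n}" and Y': "Y' \<in> {..<2 ^ n}"
      then have X'l: "X' < 2 ^ n" and Y'l: "Y' < 2 ^ n" by auto
      have e: "(l = xorv n Y' (qbit n X')) = (Y' = xorv n l (qbit n X'))"
        using xorv_eq_iff[OF Y'l l] by simp
      show "?Hd $$ (?K, tcm n n (cidx n X' Y')) * ?W $$ (cidx n X' Y', z) = (if Y' = xorv n l (qbit n X') then hh ^ n * sg (dotb n (qbit n k) (qbit n X')) * ?W $$ (cidx n X' Y', z) else 0)"
        using X'l Y'l k l K by (simp add: tcm_cidx hadamard_entry cidx_less e)
    qed
    also have "\<dots> = (\<Sum>X'<2 ^ n. hh ^ n * sg (dotb n (qbit n k) (qbit n X')) * ?W $$ (cidx n X' (xorv n l (qbit n X')), z))"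
      by (intro sum.cong refl sum_single) simp
    finally show ?thesis .
  qed
  have "twin_circuit n C $$ (?K, ?J) = (?Hd * ?T * ?W * ?T * ?Hd) $$ (?K, ?J)"
    by (simp add: twin_circuit_def tc_pmat)
  also have "\<dots> = (\<Sum>u<?N. (?Hd * ?T * ?W * ?T) $$ (?K, u) * ?Hd $$ (u, ?J))"
    using K J by (intro mult_entry[OF cHTWT hadamard_carrier])
  also have "\<dots> = (\<Sum>u<?N. (?Hd * ?T * ?W) $$ (?K, tcm n n u) * ?Hd $$ (u, ?J))"
  proof (intro sum.cong refl)
    fix u assume "u \<in> {..<?N}"
    then have "(?Hd * ?T * ?W * ?T) $$ (?K, u) = (?Hd * ?T * ?W) $$ (?K, tcm n n u)" using K by (intro mult_pmat_entry[OF cHTW]) auto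
    then show "(?Hd * ?T * ?W * ?T) $$ (?K, u) * ?Hd $$ (u, ?J) = (?Hd * ?T * ?W) $$ (?K, tcm n n u) * ?Hd $$ (u, ?J)" by (simp only:)
  qed
  also have "\<dots> = (\<Sum>X<2 ^ n. \<Sum>Y<2 ^ n. (?Hd * ?T * ?W) $$ (?K, tcm n n (cidx n X Y)) * ?Hd $$ (cidx n X Y, ?J))"
    by (rule sum_split)
  also have "\<dots> = (\<Sum>X<2 ^ n. \<Sum>Y<2 ^ n. if Y = j then (?Hd * ?T * ?W) $$ (?K, cidx n X (xorv n j (qbit n X))) * (hh ^ n * sg (dotb n (qbit n X) (qbit n i))) else 0)"
    using i j J by (intro sum.cong refl) (auto simp: tcm_cidx hadamard_entry cidx_less)
  also have "\<dots> = (\<Sum>X<2 ^ n. (?Hd * ?T * ?W) $$ (?K, cidx n X (xorv n j (qbit n X))) * (hh ^ n * sg (dotb n (qbit n X) (qbit n i))))"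
    using j by (intro sum.cong refl sum_single) simp
  also have "\<dots> = (\<Sum>X<2 ^ n. (\<Sum>X'<2 ^ n. hh ^ n * sg (dotb n (qbit n k) (qbit n X')) * (C $$ (X', X) * C $$ (xorv n l (qbit n X'), xorv n j (qbit n X)))) * (hh ^ n * sg (dotb n (qbit n X) (qbit n i))))"
    by (intro sum.cong refl) (simp add: inner cidx_less twin_entry)
  also have "\<dots> = hh ^ n * hh ^ n *
    (\<Sum>X<2 ^ n. \<Sum>X'<2 ^ n. sg (dotb n (qbit n k) (qbit n X')) * sg (dotb n (qbit n X) (qbit n i)) *
        C $$ (X', X) * C $$ (xorv n l (qbit n X'), xorv n j (qbit n X)))"
    by (simp add: sum_distrib_left sum_distrib_right mult_ac)
  finally show ?thesis .
qed


lemma sum4_swap: "(\<Sum>a\<in>A. \<Sum>b\<in>B. \<Sum>c\<in>C. \<Sum>d\<in>D. f a b c d) = (\<Sum>c\<in>C. \<Sum>d\<in>D. \<Sum>a\<in>A. \<Sum>b\<in>B. (f a b c d :: complex))"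
proof -
  have "(\<Sum>a\<in>A. \<Sum>b\<in>B. \<Sum>c\<in>C. \<Sum>d\<in>D. f a b c d) = (\<Sum>a\<in>A. \<Sum>c\<in>C. \<Sum>b\<in>B. \<Sum>d\<in>D. f a b c d)"
    by (rule sum.cong[OF refl], rule sum.swap)
  also have "\<dots> = (\<Sum>a\<in>A. \<Sum>c\<in>C. \<Sum>d\<in>D. \<Sum>b\<in>B. f a b c d)"
    by (rule sum.cong[OF refl], rule sum.cong[OF refl], rule sum.swap)
  also have "\<dots> = (\<Sum>c\<in>C. \<Sum>a\<in>A. \<Sum>d\<in>D. \<Sum>b\<in>B. f a b c d)"
    by (rule sum.swap)
  also have "\<dots> = (\<Sum>c\<in>C. \<Sum>d\<in>D. \<Sum>a\<in>A. \<Sum>b\<in>B. f a b c d)"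
    by (rule sum.cong[OF refl], rule sum.swap)
  finally show ?thesis .
qed

lemma pz: "(\<Sum>y\<in>A. \<Sum>y'\<in>B. c * (a y * b y')) = (c::complex) * ((\<Sum>y\<in>A. a y) * (\<Sum>y'\<in>B. b y'))"
  unfolding sum_product by (simp only: sum_distrib_left)

lemma cnj_sg[simp]: "cnj (sg p) = sg p" by (simp add: sg_def)

lemma dotb_xorv_left: "dotb n (qbit n (xorv n k w)) v = (dotb n (qbit n k) v \<noteq> dotb n w v)"
  using dotb_xorv[of n v k w] by (simp add: dotb_comm)

lemma char_orth: assumes y: "y < 2 ^ n" and y': "y' < 2 ^ n"
  shows "(\<Sum>k<2 ^ n. sg (dotb n (qbit n k) (qbit n y)) * sg (dotb n (qbit n k) (qbit n y'))) = (if y = y' then 2 ^ n else 0)"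
proof (cases "y = y'")
  case True then show ?thesis by simp
next
  case False
  then obtain r where r: "r < n" "qbit n y r \<noteq> qbit n y' r" using qbit_eqI[OF y y'] by blast
  let ?v = "\<lambda>q. qbit n y q \<noteq> qbit n y' q"
  have eq: "sg (dotb n (qbit n k) (qbit n y)) * sg (dotb n (qbit n k) (qbit n y')) = sg (dotb n (qbit n k) ?v)" for k
    by (simp only: dotb_xor2 sg_xor)
  let ?T = "\<Sum>k<2 ^ n. sg (dotb n (qbit n k) ?v)"
  have ev: "dotb n (\<lambda>q. q = r) ?v = True" using r by (simp add: dotb_ind)
  have "?T = (\<Sum>k<2 ^ n. sg (dotb n (qbit n (xorv n k (\<lambda>q. q = r))) ?v))"
    by (rule sum_xorv[symmetric])
  also have "\<dots> = (\<Sum>k<2 ^ n. - sg (dotb n (qbit n k) ?v))"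
    by (intro sum.cong refl) (simp only: dotb_xorv_left ev sg_xor, simp)
  also have "\<dots> = - ?T" by (simp add: sum_negf)
  finally have "?T = 0" by simp
  then show ?thesis using False by (simp only: eq) simp
qed

lemma walsh_parseval: assumes "\<And>y. y < 2 ^ n \<Longrightarrow> True"
  shows "(\<Sum>k<2 ^ n. (\<Sum>y<2 ^ n. sg (dotb n (qbit n k) (qbit n y)) * F y) * cnj (\<Sum>y<2 ^ n. sg (dotb n (qbit n k) (qbit n y)) * F y))
     = 2 ^ n * (\<Sum>y<2 ^ n. F y * cnj (F y))"
proof -
  have "(\<Sum>k<2 ^ n. (\<Sum>y<2 ^ n. sg (dotb n (qbit n k) (qbit n y)) * F y) * cnj (\<Sum>y<2 ^ n. sg (dotb n (qbit n k) (qbit n y)) * F y))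
      = (\<Sum>k<2 ^ n. \<Sum>y<2 ^ n. \<Sum>y'<2 ^ n. (sg (dotb n (qbit n k) (qbit n y)) * sg (dotb n (qbit n k) (qbit n y'))) * (F y * cnj (F y')))"
    by (simp add: sum_product mult_ac)
  also have "\<dots> = (\<Sum>y<2 ^ n. \<Sum>y'<2 ^ n. (\<Sum>k<2 ^ n. sg (dotb n (qbit n k) (qbit n y)) * sg (dotb n (qbit n k) (qbit n y'))) * (F y * cnj (F y')))"
  proof -
    have "(\<Sum>k<(2::nat) ^ n. \<Sum>y<(2::nat) ^ n. \<Sum>y'<(2::nat) ^ n. (sg (dotb n (qbit n k) (qbit n y)) * sg (dotb n (qbit n k) (qbit n y'))) * (F y * cnj (F y')))
       = (\<Sum>y<2 ^ n. \<Sum>k<2 ^ n. \<Sum>y'<2 ^ n. (sg (dotb n (qbit n k) (qbit n y)) * sg (dotb n (qbit n k) (qbit n y'))) * (F y * cnj (F y')))"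
      by (rule sum.swap)
    also have "\<dots> = (\<Sum>y<2 ^ n. \<Sum>y'<2 ^ n. \<Sum>k<2 ^ n. (sg (dotb n (qbit n k) (qbit n y)) * sg (dotb n (qbit n k) (qbit n y'))) * (F y * cnj (F y')))"
      by (rule sum.cong[OF refl], rule sum.swap)
    finally show ?thesis by (simp add: sum_distrib_right)
  qed
  also have "\<dots> = (\<Sum>y<2 ^ n. \<Sum>y'<2 ^ n. if y' = y then 2 ^ n * (F y * cnj (F y')) else 0)"
    by (intro sum.cong refl) (auto simp: char_orth)
  also have "\<dots> = (\<Sum>y<2 ^ n. 2 ^ n * (F y * cnj (F y)))"
    by (intro sum.cong refl) (simp add: sum_single)
  also have "\<dots> = 2 ^ n * (\<Sum>y<2 ^ n. F y * cnj (F y))" by (simp add: sum_distrib_left)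
  finally show ?thesis .
qed

context twin begin

lemma G_circ: "(\<Sum>X<2 ^ n. \<Sum>X'<2 ^ n. sg (dotb n (qbit n k) (qbit n X')) * sg (dotb n (qbit n X) (qbit n i)) *
        C $$ (X', X) * C $$ (xorv n l (qbit n X'), xorv n j (qbit n X))) = G k l i j"
proof -
  have "(\<Sum>X<2 ^ n. \<Sum>X'<2 ^ n. sg (dotb n (qbit n k) (qbit n X')) * sg (dotb n (qbit n X) (qbit n i)) *
        C $$ (X', X) * C $$ (xorv n l (qbit n X'), xorv n j (qbit n X)))
      = (\<Sum>X'<2 ^ n. \<Sum>X<2 ^ n. sg (dotb n (qbit n k) (qbit n X')) * sg (dotb n (qbit n X) (qbit n i)) *
        C $$ (X', X) * C $$ (xorv n l (qbit n X'), xorv n j (qbit n X)))"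
    by (rule sum.swap)
  also have "\<dots> = G k l i j"
    unfolding G_def Hs_def sum_distrib_left
    by (intro sum.cong refl) (simp add: xorv_sym[of n l] xorv_sym[of n j] dotb_comm[of n "qbit n _" "qbit n i"] mult_ac)
  finally show ?thesis .
qed

definition Q :: "nat \<Rightarrow> nat \<Rightarrow> nat \<Rightarrow> nat \<Rightarrow> complex" where
  "Q i j y y' = (\<Sum>x<2 ^ n. sg (dotb n (qbit n i) (qbit n x)) * C $$ (y, x) * C $$ (y', xorv n x (qbit n j)))"

lemma Q_norm: assumes j: "j < 2 ^ n"
  shows "(\<Sum>y<2 ^ n. \<Sum>y'<2 ^ n. Q i j y y' * cnj (Q i j y y')) = 2 ^ n"
proof -
  let ?s = "\<lambda>x. sg (dotb n (qbit n i) (qbit n x))"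
  have "(\<Sum>y<2 ^ n. \<Sum>y'<2 ^ n. Q i j y y' * cnj (Q i j y y'))
      = (\<Sum>y<2 ^ n. \<Sum>y'<2 ^ n. \<Sum>x<2 ^ n. \<Sum>z<2 ^ n. (?s x * ?s z) * ((cnj (C $$ (y, z)) * C $$ (y, x)) * (cnj (C $$ (y', xorv n z (qbit n j))) * C $$ (y', xorv n x (qbit n j)))))"
    unfolding Q_def by (simp add: sum_product mult_ac)
  also have "\<dots> = (\<Sum>x<2 ^ n. \<Sum>z<2 ^ n. \<Sum>y<2 ^ n. \<Sum>y'<2 ^ n. (?s x * ?s z) * ((cnj (C $$ (y, z)) * C $$ (y, x)) * (cnj (C $$ (y', xorv n z (qbit n j))) * C $$ (y', xorv n x (qbit n j)))))"
    by (rule sum4_swap)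
  also have "\<dots> = (\<Sum>x<2 ^ n. \<Sum>z<2 ^ n. (?s x * ?s z) * ((\<Sum>y<2 ^ n. cnj (C $$ (y, z)) * C $$ (y, x)) * (\<Sum>y'<2 ^ n. cnj (C $$ (y', xorv n z (qbit n j))) * C $$ (y', xorv n x (qbit n j)))))"
    by (rule sum.cong[OF refl], rule sum.cong[OF refl], rule pz)
  also have "\<dots> = (\<Sum>x<(2::nat) ^ n. \<Sum>z<(2::nat) ^ n. if z = x then (1::complex) else 0)"
    by (rule sum.cong[OF refl], rule sum.cong[OF refl]) (auto simp: col_orth xorv_inj)
  also have "\<dots> = 2 ^ n" by simp
  finally show ?thesis .
qed

lemma Hs_Q: "y < 2 ^ n \<Longrightarrow> Hs l i j y = Q i j y (xorv n l (qbit n y))"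
  unfolding Hs_def Q_def by (simp add: xorv_sym)

lemma parseval: assumes i: "i < 2 ^ n" and j: "j < 2 ^ n"
  shows "(\<Sum>k<2 ^ n. \<Sum>l<2 ^ n. G k l i j * cnj (G k l i j)) = 2 ^ n * 2 ^ n"
proof -
  have "(\<Sum>k<2 ^ n. \<Sum>l<2 ^ n. G k l i j * cnj (G k l i j)) = (\<Sum>l<2 ^ n. \<Sum>k<2 ^ n. G k l i j * cnj (G k l i j))"
    by (rule sum.swap)
  also have "\<dots> = (\<Sum>l<2 ^ n. 2 ^ n * (\<Sum>y<2 ^ n. Hs l i j y * cnj (Hs l i j y)))"
    unfolding G_def by (intro sum.cong refl walsh_parseval) simp
  also have "\<dots> = 2 ^ n * (\<Sum>y<2 ^ n. \<Sum>l<2 ^ n. Hs l i j y * cnj (Hs l i j y))"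
  proof -
    have "(\<Sum>l<(2::nat) ^ n. 2 ^ n * (\<Sum>y<(2::nat) ^ n. Hs l i j y * cnj (Hs l i j y))) = 2 ^ n * (\<Sum>l<(2::nat) ^ n. \<Sum>y<(2::nat) ^ n. Hs l i j y * cnj (Hs l i j y))"
      by (rule sum_distrib_left[symmetric])
    also have "\<dots> = 2 ^ n * (\<Sum>y<2 ^ n. \<Sum>l<2 ^ n. Hs l i j y * cnj (Hs l i j y))"
      by (rule arg_cong[where f="\<lambda>z. 2 ^ n * z"], rule sum.swap)
    finally show ?thesis .
  qed
  also have "(\<Sum>y<2 ^ n. \<Sum>l<2 ^ n. Hs l i j y * cnj (Hs l i j y)) = (\<Sum>y<2 ^ n. \<Sum>y'<2 ^ n. Q i j y y' * cnj (Q i j y y'))"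
  proof (rule sum.cong[OF refl])
    fix y assume "y \<in> {..<(2::nat) ^ n}"
    then have y: "y < 2 ^ n" by simp
    have "(\<Sum>l<2 ^ n. Hs l i j y * cnj (Hs l i j y)) = (\<Sum>l<2 ^ n. Q i j y (xorv n l (qbit n y)) * cnj (Q i j y (xorv n l (qbit n y))))"
      using y by (simp add: Hs_Q)
    also have "\<dots> = (\<Sum>l<2 ^ n. Q i j y l * cnj (Q i j y l))"
      by (rule sum_xorv)
    finally show "(\<Sum>l<2 ^ n. Hs l i j y * cnj (Hs l i j y)) = (\<Sum>y'<2 ^ n. Q i j y y' * cnj (Q i j y y'))" .
  qed
  also have "\<dots> = 2 ^ n" by (rule Q_norm[OF j])
  finally show ?thesis .
qed

end


context twin begin

lemma is_sympl: "sympl n a b c d"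
  unfolding sympl_def using ZZ XX ZX by blast

lemma concat_lo: "t < n \<Longrightarrow> concat_bits n x y t = qbit n x t" by (simp add: concat_bits_def)
lemma concat_hi: "concat_bits n x y (n + q) = qbit n y q" by (simp add: concat_bits_def)

lemma constraint: assumes G: "G k l i j \<noteq> 0" and t: "t < 2 * n"
  shows "concat_bits n i j t = phiv n a b c d (concat_bits n k l) t"
proof (cases "t < n")
  case True
  let ?K = "concat_bits n k l"
  have o: "omg n (\<lambda>q. symp_S n a b c d q (piv n t)) ?K = (dotb n (c t) (qbit n l) \<noteq> dotb n (d t) (qbit n k))"
    unfolding omg_def using True
    by (intro arg_cong2[where f="(\<noteq>)"] dotb_cong) (auto simp: piv_def symp_S_def concat_bits_def)
  show ?thesis using G_constr(2)[OF G True] True o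
    by (simp add: phiv_def gv_def concat_lo dotb_comm[of n "qbit n k"])
next
  case False
  then obtain t' where t': "t = n + t'" "t' < n" using t by (metis add_diff_inverse_nat add_less_cancel_left mult_2)
  let ?K = "concat_bits n k l"
  have o: "omg n (\<lambda>q. symp_S n a b c d q (piv n t)) ?K = (dotb n (a t') (qbit n l) \<noteq> dotb n (b t') (qbit n k))"
    unfolding omg_def using t'
    by (intro arg_cong2[where f="(\<noteq>)"] dotb_cong) (auto simp: piv_def symp_S_def concat_bits_def)
  show ?thesis using G_constr(1)[OF G t'(2)] t' o
    by (simp add: phiv_def gv_def concat_hi dotb_comm[of n "qbit n k"])
qed

abbreviation "F0 \<equiv> f2_mulv (2 * n) (symp_S n a b c d) (gv n a b c d)"

definition Cond :: "nat \<Rightarrow> nat \<Rightarrow> nat \<Rightarrow> nat \<Rightarrow> bool" where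
  "Cond i j k l = (\<forall>r<2 * n. concat_bits n k l r = (f2_mulv (2 * n) (symp_S n a b c d) (concat_bits n i j) r \<noteq> F0 r))"

lemma G_Cond: assumes "G k l i j \<noteq> 0" shows "Cond i j k l"
  unfolding Cond_def using sympl.solve[OF is_sympl, of "concat_bits n i j" "concat_bits n k l"] constraint[OF assms] by blast

lemma Cond_unique: assumes "Cond i j k l" "Cond i j k' l'" "k < 2 ^ n" "l < 2 ^ n" "k' < 2 ^ n" "l' < 2 ^ n"
  shows "k' = k \<and> l' = l"
proof -
  have e: "concat_bits n k l r = concat_bits n k' l' r" if "r < 2 * n" for r
    using assms(1,2) that unfolding Cond_def by simp
  have "k' = k"
  proof (rule qbit_eqI[OF assms(5) assms(3)])
    fix r assume r: "r < n"
    then show "qbit n k' r = qbit n k r" using e[of r] by (simp add: concat_lo)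
  qed
  moreover have "l' = l"
  proof (rule qbit_eqI[OF assms(6) assms(4)])
    fix r assume r: "r < n"
    then show "qbit n l' r = qbit n l r" using e[of "n + r"] by (simp add: concat_hi)
  qed
  ultimately show ?thesis by simp
qed

lemma cmod_hh: "cmod hh = 1 / sqrt 2" by (simp only: hh_def norm_of_real) simp

lemma prob_G: assumes "i < 2 ^ n" "j < 2 ^ n" "k < 2 ^ n" "l < 2 ^ n"
  shows "twin_prob n C i j k l = (cmod (G k l i j))\<^sup>2 / 4 ^ n"
proof -
  have "twin_circuit n C $$ (k * 2 ^ n + l, i * 2 ^ n + j) = hh ^ n * hh ^ n * G k l i j"
    using circuit_entry[OF Ccar assms(3,4,1,2)] G_circ by (simp add: cidx_def)
  then have "twin_prob n C i j k l = (cmod (hh ^ n * hh ^ n * G k l i j))\<^sup>2"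
    by (simp add: twin_prob_def)
  also have "\<dots> = ((1 / sqrt 2) ^ n * (1 / sqrt 2) ^ n) ^ 2 * (cmod (G k l i j))\<^sup>2"
    by (simp add: norm_mult norm_power cmod_hh power_mult_distrib)
  also have "((1 / sqrt 2) ^ n * (1 / sqrt 2) ^ n) ^ 2 = (1 / 4 ^ n :: real)"
  proof -
    have s2: "(1 / sqrt 2 :: real) ^ 2 = 1 / 2" by (simp add: power_divide)
    have "(1 / sqrt 2 :: real) ^ n * (1 / sqrt 2) ^ n = (1 / 2) ^ n"
      by (metis power_mult_distrib s2 power2_eq_square)
    moreover have "((1 / 2 :: real) ^ n) ^ 2 = ((1 / 2) ^ 2) ^ n" by (metis power_mult mult.commute)
    moreover have "((1 / 2 :: real) ^ 2) ^ n = 1 / 4 ^ n" by (simp add: power_divide)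
    ultimately show ?thesis by simp
  qed
  finally show ?thesis by simp
qed

lemma parseval_real: assumes "i < 2 ^ n" "j < 2 ^ n"
  shows "(\<Sum>k<2 ^ n. \<Sum>l<2 ^ n. (cmod (G k l i j))\<^sup>2) = 4 ^ n"
proof -
  have "complex_of_real (\<Sum>k<2 ^ n. \<Sum>l<2 ^ n. (cmod (G k l i j))\<^sup>2) = (\<Sum>k<2 ^ n. \<Sum>l<2 ^ n. G k l i j * cnj (G k l i j))"
    by (simp only: of_real_sum complex_norm_square)
  also have "\<dots> = 2 ^ n * 2 ^ n" by (rule parseval[OF assms])
  also have "\<dots> = complex_of_real (4 ^ n)" by (simp add: power_mult_distrib[symmetric])
  finally show ?thesis using of_real_eq_iff by blast
qed

lemma main: assumes i: "i < 2 ^ n" and j: "j < 2 ^ n" and k: "k < 2 ^ n" and l: "l < 2 ^ n"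
  shows "twin_prob n C i j k l = (if Cond i j k l then 1 else 0)"
proof (cases "Cond i j k l")
  case True
  have z: "(cmod (G k' l' i j))\<^sup>2 = (if k' = k \<and> l' = l then (cmod (G k l i j))\<^sup>2 else 0)"
    if "k' < 2 ^ n" "l' < 2 ^ n" for k' l'
  proof (cases "G k' l' i j = 0")
    case False
    then have "k' = k \<and> l' = l" using Cond_unique[OF True G_Cond[OF False] k l that] by simp
    then show ?thesis by simp
  qed auto
  have "(\<Sum>k'<2 ^ n. \<Sum>l'<2 ^ n. (cmod (G k' l' i j))\<^sup>2) = (\<Sum>k'<2 ^ n. \<Sum>l'<2 ^ n. if k' = k \<and> l' = l then (cmod (G k l i j))\<^sup>2 else 0)"
    by (rule sum.cong[OF refl], rule sum.cong[OF refl]) (simp add: z)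
  also have "\<dots> = (\<Sum>k'<2 ^ n. if k' = k then (cmod (G k l i j))\<^sup>2 else 0)"
    by (rule sum.cong[OF refl]) (use l in \<open>auto simp: sum_single\<close>)
  also have "\<dots> = (cmod (G k l i j))\<^sup>2" using k by (simp add: sum_single)
  finally have "(cmod (G k l i j))\<^sup>2 = 4 ^ n" using parseval_real[OF i j] by simp
  then show ?thesis using True prob_G[OF i j k l] by simp
next
  case False
  then have "G k l i j = 0" using G_Cond by blast
  then show ?thesis using False prob_G[OF i j k l] by simp
qed

end

theorem lemma1:
  fixes n :: nat and C :: "complex mat"
    and a b c d :: "nat \<Rightarrow> nat \<Rightarrow> bool" and f h :: "nat \<Rightarrow> bool"
  assumes "n \<ge> 1"
    and "C \<in> clifford_group n"
    and "\<And>i. i < n \<Longrightarrow> C * Zop n i * dagger C = (if f i then -1 else 1) \<cdot>\<^sub>m pauli n (a i) (b i)"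
    and "\<And>i. i < n \<Longrightarrow> C * Xop n i * dagger C = (if h i then -1 else 1) \<cdot>\<^sub>m pauli n (c i) (d i)"
  shows "\<exists>F0 :: nat \<Rightarrow> bool. \<forall>i<2 ^ n. \<forall>j<2 ^ n. \<forall>k<2 ^ n. \<forall>l<2 ^ n.
           twin_prob n C i j k l =
             (if \<forall>r<2 * n. concat_bits n k l r =
                   (f2_mulv (2 * n) (symp_S n a b c d) (concat_bits n i j) r \<noteq> F0 r)
              then 1 else 0)"
proof -
  interpret T: twin n C a b c d f h
    using assms(2-4) by unfold_locales auto
  show ?thesis
    by (rule exI[of _ "f2_mulv (2 * n) (symp_S n a b c d) (gv n a b c d)"])
       (auto simp: T.main T.Cond_def)
qed


end
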